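(* Let $\mathcal{C}$, $\mathcal{F}$, $\prec$ be as in the context, let $\mathcal{Q}$ be a prime ideal of $\mathcal{C}$, let $h\in\mathcal{C}\smallsetminus\mathcal{Q}$, and let $g_1,\ldots,g_r\in\hat{\mathcal{D}}_n(\mathcal{C}[h^{-1}])\langle z\rangle\smallsetminus\hat{\mathcal{D}}_n(\mathcal{Q}[h^{-1}])\langle z\rangle$ be such that for each $j$ the numerator of $\mathrm{lc}^{\mathrm{mod}\mathcal{Q}}(g_j)$ divides $h$ in $\mathcal{C}$. Let $\Delta_1\cup\cdots\cup\Delta_r\cup\bar\Delta$ be the partition of $\mathbb{N}^{2n+1}$ associated with $e_j=\exp^{\mathrm{mod}\mathcal{Q}}(g_j)$, i.e. $\Delta_1=e_1+\mathbb{N}^{2n+1}$, $\Delta_j=(e_j+\mathbb{N}^{2n+1})\smallsetminus\bigcup_{k<j}\Delta_k$ for $j\ge2$, and $\bar\Delta=\mathbb{N}^{2n+1}\smallsetminus\bigcup_j\Delta_j$. Then for every $P\in\hat{\mathcal{D}}_n(\mathcal{C}[h^{-1}])\langle z\rangle$ there exist $q_1,\ldots,q_r,R,T\in\hat{\mathcal{D}}_n(\mathcal{F})\langle z\rangle$ such that (o) $P=\sum_j q_jg_j+R+T$; (i) if $q_j\neq0$ then $\mathrm{Supp}(q_j)+\exp^{\mathrm{mod}\mathcal{Q}}(g_j)\subset\Delta_j$; (ii) if $R\ne0$ then $\mathrm{Supp}(R)\subset\bar\Delta$; (iii) $q_1,\ldots,q_r,R\in\hat{\mathcal{D}}_n(\mathcal{C}[h^{-1}])\langle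 z\rangle$ and $T\in\hat{\mathcal{D}}_n(\mathcal{Q}[h^{-1}])\langle z\rangle$. Moreover $(q_1,\ldots,q_r,R)$ is unique modulo $\hat{\mathcal{D}}_n(\mathcal{Q}[h^{-1}])\langle z\rangle$: for any two such tuples, the differences of corresponding components lie in $\hat{\mathcal{D}}_n(\mathcal{Q}[h^{-1}])\langle z\rangle$.
   Context: $x=(x_1,\ldots,x_n)$. For a commutative ring $A$, $\hat{\mathcal{D}}_n(A)\langle z\rangle$ is the $A[[x]]$-algebra generated by $\partial_{x_1},\ldots,\partial_{x_n}$ and a central variable $z$, with commuting $\partial_{x_i}$ and $[\partial_{x_i},a]=\frac{\partial a}{\partial x_i}z$ for $a\in A[[x]]$; each element is written uniquely $P=\sum c_{\alpha\beta k}x^\alpha\partial_x^\beta z^k$ ($c_{\alpha\beta k}\in A$), and $\mathrm{Supp}(P)=\{(\alpha,\beta,k)\in\mathbb{N}^{2n+1}: c_{\alpha\beta k}\neq0\}$. $\mathcal{C}$ is a commutative integral domain with $1$ (not necessarily noetherian) such that no nonzero integer lies in a prime ideal of $\mathcal{C}$; $\mathcal{F}=\mathrm{Frac}(\mathcal{C})$. For a subring $A\subset\mathcal{F}$, $\hat{\mathcal{D}}_n(A)\langle z\rangle$ is viewed inside $\hat{\mathcal{D}}_n(\mathcal{F})\langle z\rangle$. For $h\in\mathcal{C}$, $\mathcal{C}[h^{-1}]$ is the localization, and $\hat{\mathcal{D}}_n(\mathcal{Q}[h^{-1}])\langle z\rangle$ is the set of elements of $\hat{\mathcal{D}}_n(\mathcal{C}[h^{-1}])\langle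 z\rangle$ all of whose coefficients are of the form $c/h^l$ with $c\in\mathcal{Q}$. $\mathcal{C}_\mathcal{Q}$ is the localization at $\mathcal{Q}$, and $\langle\mathcal{Q}\rangle$ is the set of elements of $\hat{\mathcal{D}}_n(\mathcal{F})\langle z\rangle$ whose coefficients are $c/c'$ with $c\in\mathcal{Q}$. An admissible order $\prec$ is a total order on $\mathbb{N}^{2n}$ compatible with addition (a monomial order on monomials $x^\alpha\xi^\beta$) with $x_i\prec1$ and $x_i\xi_i\succ1$ for all $i$. $\prec^h$ on $\mathbb{N}^{2n+1}$: $(\alpha,\beta,k)\prec^h(\alpha',\beta',k')$ iff $|\beta|+k<|\beta'|+k'$, or equality and $(\alpha,\beta)\prec(\alpha',\beta')$. Fix an admissible $\prec$; all maxima below are for $\prec^h$. For $P\in\hat{\mathcal{D}}_n(\mathcal{C}_\mathcal{Q})\langle z\rangle\smallsetminus\langle\mathcal{Q}\rangle$, write its coefficients as $c_{\alpha\beta k}/c'_{\alpha\beta k}$ with $c'_{\alpha\beta k}\notin\mathcal{Q}$; $\exp^{\mathrm{mod}\mathcal{Q}}(P)$ is the $\prec^h$-maximum of the $(\alpha,\beta,k)$ with $c_{\alpha\beta k}\notin\mathcal{Q}$, $\mathrm{lc}^{\mathrm{mod}\mathcal{Q}}(P)$ is the coefficient $c/c'$ of $P$ at that exponent (its numerator is $c$), and $\mathrm{lm}^{\mathrm{mod}\mathcal{Q}}(P)$ is the corresponding term. *)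

theory Defs
  imports "HOL-Computational_Algebra.Fraction_Field"
begin

definition is_ideal :: "'a::comm_ring_1 set \<Rightarrow> bool" where
  "is_ideal I \<longleftrightarrow> 0 \<in> I \<and> (\<forall>a\<in>I. \<forall>b\<in>I. a + b \<in> I) \<and> (\<forall>a\<in>I. \<forall>r. r * a \<in> I)"

definition is_prime_ideal :: "'a::comm_ring_1 set \<Rightarrow> bool" where
  "is_prime_ideal I \<longleftrightarrow> is_ideal I \<and> 1 \<notin> I \<and> (\<forall>a b. a * b \<in> I \<longrightarrow> a \<in> I \<or> b \<in> I)"

definition no_int_in_primes :: "'a::comm_ring_1 itself \<Rightarrow> bool" where
  "no_int_in_primes _ \<longleftrightarrow> (\<forall>P :: 'a set. is_prime_ideal P \<longrightarrow> (\<forall>m::int. of_int m \<in> P \<longrightarrow> m = 0))"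

text \<open>The index type 'n (finite) stands for {1..n}. An exponent (alpha, beta, k) of
  x^alpha d^beta z^k is a triple in N^n x N^n x N. An element of hat D_n(F)<z> is given by
  its coefficient function (alpha, beta, k) |-> c_{alpha beta k}; it is a formal power
  series in x and a polynomial in d and z, i.e. only finitely many (beta,k) occur.\<close>

type_synonym 'n mexp = "('n \<Rightarrow> nat) \<times> ('n \<Rightarrow> nat) \<times> nat"
type_synonym ('n, 'f) dop = "('n \<Rightarrow> nat) \<Rightarrow> ('n \<Rightarrow> nat) \<Rightarrow> nat \<Rightarrow> 'f"

definition supp :: "('n, 'f::zero) dop \<Rightarrow> 'n mexp set" where
  "supp P = {(a, b, k). P a b k \<noteq> 0}"

definition wf_dop :: "('n, 'f::zero) dop \<Rightarrow> bool" where
  "wf_dop P \<longleftrightarrow> finite {(b, k). \<exists>a. P a b k \<noteq> 0}"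

definition dop_over :: "'f::zero set \<Rightarrow> ('n, 'f) dop set" where
  "dop_over A = {P. wf_dop P \<and> (\<forall>a b k. P a b k \<in> A)}"

definition dzero :: "('n, 'f::zero) dop" where
  "dzero = (\<lambda>a b k. 0)"

definition dadd :: "('n, 'f::plus) dop \<Rightarrow> ('n, 'f) dop \<Rightarrow> ('n, 'f) dop" where
  "dadd P Q = (\<lambda>a b k. P a b k + Q a b k)"

definition dminus :: "('n, 'f::minus) dop \<Rightarrow> ('n, 'f) dop \<Rightarrow> ('n, 'f) dop" where
  "dminus P Q = (\<lambda>a b k. P a b k - Q a b k)"

text \<open>Product in hat D_n(F)<z>, from the commutation rule [d_i, a] = (da/dx_i) z:
  (x^al d^be z^k)(x^ga d^de z^l) =
     sum_{mu <= be, mu <= ga} (be choose mu) ga!/(ga-mu)! x^(al+ga-mu) d^(be-mu+de) z^(k+l+|mu|).\<close>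
definition dmult :: "('n::finite, 'f::field) dop \<Rightarrow> ('n, 'f) dop \<Rightarrow> ('n, 'f) dop" where
  "dmult P Q = (\<lambda>a b m.
     \<Sum>(al, be, k, ga, de, l, mu) \<in>
       {(al, be, k, ga, de, l, mu).
          (\<forall>i. mu i \<le> be i \<and> mu i \<le> ga i \<and> al i + (ga i - mu i) = a i \<and> be i - mu i + de i = b i)
          \<and> k + l + (\<Sum>i\<in>UNIV. mu i) = m \<and> P al be k \<noteq> 0 \<and> Q ga de l \<noteq> 0}.
       P al be k * Q ga de l *
       of_nat (\<Prod>i\<in>UNIV. (be i choose mu i) * (fact (ga i) div fact (ga i - mu i))))"

text \<open>An admissible order: a strict total order on N^n x N^n (pairs (alpha, beta) standing for
  x^alpha xi^beta), compatible with addition, with x_i < 1 and 1 < x_i xi_i.\<close>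
definition admissible :: "(('n \<Rightarrow> nat) \<times> ('n \<Rightarrow> nat) \<Rightarrow> ('n \<Rightarrow> nat) \<times> ('n \<Rightarrow> nat) \<Rightarrow> bool) \<Rightarrow> bool" where
  "admissible ord \<longleftrightarrow>
     (\<forall>u. \<not> ord u u) \<and> (\<forall>u v w. ord u v \<longrightarrow> ord v w \<longrightarrow> ord u w) \<and>
     (\<forall>u v. u \<noteq> v \<longrightarrow> ord u v \<or> ord v u) \<and>
     (\<forall>a b a' b' c d. ord (a, b) (a', b') \<longrightarrow>
        ord (\<lambda>i. a i + c i, \<lambda>i. b i + d i) (\<lambda>i. a' i + c i, \<lambda>i. b' i + d i)) \<and>
     (\<forall>i. ord (\<lambda>j. if j = i then 1 else 0, \<lambda>j. 0) (\<lambda>j. 0, \<lambda>j. 0)) \<and>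
     (\<forall>i. ord (\<lambda>j. 0, \<lambda>j. 0) (\<lambda>j. if j = i then 1 else 0, \<lambda>j. if j = i then 1 else 0))"

definition ordh :: "(('n \<Rightarrow> nat) \<times> ('n \<Rightarrow> nat) \<Rightarrow> ('n \<Rightarrow> nat) \<times> ('n \<Rightarrow> nat) \<Rightarrow> bool)
                     \<Rightarrow> 'n::finite mexp \<Rightarrow> 'n mexp \<Rightarrow> bool" where
  "ordh ord e e' = (case e of (a, b, k) \<Rightarrow> case e' of (a', b', k') \<Rightarrow>
      (\<Sum>i\<in>UNIV. b i) + k < (\<Sum>i\<in>UNIV. b' i) + k' \<or>
      ((\<Sum>i\<in>UNIV. b i) + k = (\<Sum>i\<in>UNIV. b' i) + k' \<and> ord (a, b) (a', b')))"

definition loc_h :: "'c::idom \<Rightarrow> 'c fract set" where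
  "loc_h h = {u. \<exists>c l. u = Fract c (h ^ l)}"

definition locQ_h :: "'c::idom set \<Rightarrow> 'c \<Rightarrow> 'c fract set" where
  "locQ_h Q h = {u. \<exists>c\<in>Q. \<exists>l. u = Fract c (h ^ l)}"

definition loc_at :: "'c::idom set \<Rightarrow> 'c fract set" where
  "loc_at Q = {u. \<exists>c c'. c' \<notin> Q \<and> u = Fract c c'}"

text \<open>Coefficients belonging to \<langle>Q\<rangle> (inside C_Q): of the form c/c' with c in Q, c' not in Q.\<close>
definition coeffQ :: "'c::idom set \<Rightarrow> 'c fract set" where
  "coeffQ Q = {u. \<exists>c c'. c \<in> Q \<and> c' \<notin> Q \<and> u = Fract c c'}"

definition exp_modQ ::
  "(('n \<Rightarrow> nat) \<times> ('n \<Rightarrow> nat) \<Rightarrow> ('n \<Rightarrow> nat) \<times> ('n \<Rightarrow> nat) \<Rightarrow> bool)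
    \<Rightarrow> 'c::idom set \<Rightarrow> ('n::finite, 'c fract) dop \<Rightarrow> 'n mexp" where
  "exp_modQ ord Q P =
     (THE e. e \<in> {(a, b, k). P a b k \<notin> coeffQ Q} \<and>
        (\<forall>e' \<in> {(a, b, k). P a b k \<notin> coeffQ Q}. e' \<noteq> e \<longrightarrow> ordh ord e' e))"

definition lc_modQ ::
  "(('n \<Rightarrow> nat) \<times> ('n \<Rightarrow> nat) \<Rightarrow> ('n \<Rightarrow> nat) \<times> ('n \<Rightarrow> nat) \<Rightarrow> bool)
    \<Rightarrow> 'c::idom set \<Rightarrow> ('n::finite, 'c fract) dop \<Rightarrow> 'c fract" where
  "lc_modQ ord Q P = (case exp_modQ ord Q P of (a, b, k) \<Rightarrow> P a b k)"

text \<open>"The numerator of lc^{mod Q}(g) divides h": lc is written c/c' with c' not in Q and c dvd h.\<close>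
definition lc_num_dvd :: "'c::idom set \<Rightarrow> 'c fract \<Rightarrow> 'c \<Rightarrow> bool" where
  "lc_num_dvd Q u h \<longleftrightarrow> (\<exists>c c'. c' \<notin> Q \<and> u = Fract c c' \<and> c dvd h)"

definition mexp_add :: "'n mexp \<Rightarrow> 'n mexp \<Rightarrow> 'n mexp" where
  "mexp_add e f = (case e of (a, b, k) \<Rightarrow> case f of (a', b', k') \<Rightarrow>
      ((\<lambda>i. a i + a' i), (\<lambda>i. b i + b' i), k + k'))"

definition cone :: "'n mexp \<Rightarrow> 'n mexp set" where
  "cone e = {mexp_add e f | f. True}"

text \<open>Delta_j = (e_j + N^{2n+1}) minus the union of Delta_k, k < j  (indices from 0).\<close>
definition Delta :: "(nat \<Rightarrow> 'n mexp) \<Rightarrow> nat \<Rightarrow> 'n mexp set" where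
  "Delta e j = cone (e j) - (\<Union>k<j. cone (e k))"

definition Delta_bar :: "(nat \<Rightarrow> 'n mexp) \<Rightarrow> nat \<Rightarrow> 'n mexp set" where
  "Delta_bar e r = UNIV - (\<Union>j<r. Delta e j)"

definition division_rep ::
  "(('n \<Rightarrow> nat) \<times> ('n \<Rightarrow> nat) \<Rightarrow> ('n \<Rightarrow> nat) \<times> ('n \<Rightarrow> nat) \<Rightarrow> bool)
    \<Rightarrow> 'c::idom set \<Rightarrow> 'c \<Rightarrow> nat \<Rightarrow> (nat \<Rightarrow> ('n::finite, 'c fract) dop) \<Rightarrow> ('n, 'c fract) dop
    \<Rightarrow> (nat \<Rightarrow> ('n, 'c fract) dop) \<Rightarrow> ('n, 'c fract) dop \<Rightarrow> ('n, 'c fract) dop \<Rightarrow> bool" where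
  "division_rep ord Q h r g P q R T \<longleftrightarrow>
     (\<forall>j<r. q j \<in> dop_over UNIV) \<and> R \<in> dop_over UNIV \<and> T \<in> dop_over UNIV \<and>
     P = dadd (dadd (\<lambda>a b k. \<Sum>j<r. dmult (q j) (g j) a b k) R) T \<and>
     (\<forall>j<r. q j \<noteq> dzero \<longrightarrow>
        (\<forall>e\<in>supp (q j). mexp_add e (exp_modQ ord Q (g j)) \<in> Delta (\<lambda>i. exp_modQ ord Q (g i)) j)) \<and>
     (R \<noteq> dzero \<longrightarrow> supp R \<subseteq> Delta_bar (\<lambda>i. exp_modQ ord Q (g i)) r) \<and>
     (\<forall>j<r. q j \<in> dop_over (loc_h h)) \<and> R \<in> dop_over (loc_h h) \<and> T \<in> dop_over (locQ_h Q h)"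

end

theory Submission
  imports Defs "HOL-Library.Infinite_Set" "HOL-Library.FuncSet"
begin



definition deg :: "'n::finite mexp \<Rightarrow> nat" where
  "deg e = (case e of (a, b, k) \<Rightarrow> (\<Sum>i\<in>UNIV. b i) + k)"

definition dl :: "'n \<Rightarrow> 'n \<Rightarrow> nat" where "dl i = (\<lambda>j. if j = i then 1 else 0)"

lemma nat_fun_induct:
  fixes mu :: "'n::finite \<Rightarrow> nat"
  assumes "P (\<lambda>_. 0)" "\<And>mu i. P mu \<Longrightarrow> P (\<lambda>j. mu j + dl i j)"
  shows "P mu"
proof -
  have "\<forall>mu::'n\<Rightarrow>nat. sum mu UNIV = n \<longrightarrow> P mu" for n
  proof (induction n)
    case 0
    then show ?case using assms(1) by (auto simp: fun_eq_iff)
  next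
    case (Suc n)
    show ?case
    proof (intro allI impI)
      fix mu :: "'n \<Rightarrow> nat" assume s: "sum mu UNIV = Suc n"
      then obtain i where i: "mu i > 0"
        by (metis gr0I sum.neutral_const sum.cong nat.simps(3))
      define mu' where "mu' = mu(i := mu i - 1)"
      have e: "mu = (\<lambda>j. mu' j + dl i j)" using i by (auto simp: mu'_def dl_def fun_eq_iff)
      have "sum mu UNIV = sum mu' UNIV + sum (dl i) UNIV" 
        by (subst e) (simp add: sum.distrib)
      also have "sum (dl i) UNIV = 1" by (simp add: dl_def)
      finally have "sum mu' UNIV = n" using s by simp
      then have "P mu'" using Suc by blast
      then show "P mu" using assms(2) e by metis
    qed
  qed
  then show ?thesis by blast
qed

locale adm_ord =
  fixes ord :: "('n::finite \<Rightarrow> nat) \<times> ('n \<Rightarrow> nat) \<Rightarrow> ('n \<Rightarrow> nat) \<times> ('n \<Rightarrow> nat) \<Rightarrow> bool"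
  assumes adm: "admissible ord"
begin

lemma irr: "\<not> ord u u" using adm unfolding admissible_def by (cases u) blast
lemma otrans: "ord u v \<Longrightarrow> ord v w \<Longrightarrow> ord u w" using adm unfolding admissible_def by blast
lemma ototal: "u \<noteq> v \<Longrightarrow> ord u v \<or> ord v u" using adm unfolding admissible_def by blast
lemma ocompat: "ord (a, b) (a', b') \<Longrightarrow>
        ord (\<lambda>i. a i + c i, \<lambda>i. b i + d i) (\<lambda>i. a' i + c i, \<lambda>i. b' i + d i)"
  using adm unfolding admissible_def by blast
lemma ox: "ord (dl i, \<lambda>j. 0) (\<lambda>j. 0, \<lambda>j. 0)" using adm unfolding admissible_def dl_def by blast
lemma oxxi: "ord (\<lambda>j. 0, \<lambda>j. 0) (dl i, dl i)" using adm unfolding admissible_def dl_def by blast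

lemma ocancel:
  assumes "ord (\<lambda>i. a i + c i, \<lambda>i. b i + d i) (\<lambda>i. a' i + c i, \<lambda>i. b' i + d i)"
  shows "ord (a, b) (a', b')"
proof (rule ccontr)
  assume n: "\<not> ord (a, b) (a', b')"
  show False
  proof (cases "(a, b) = (a', b')")
    case True then show False using assms irr by auto
  next
    case False
    then have "ord (a', b') (a, b)" using n ototal by blast
    from ocompat[OF this, of c d] assms show False using otrans irr by blast
  qed
qed

lemma omumu: "mu \<noteq> (\<lambda>_. 0) \<Longrightarrow> ord (\<lambda>j. 0, \<lambda>j. 0) (mu, mu)"
proof (induction mu rule: nat_fun_induct)
  case 1 then show ?case by simp
next
  case (2 mu i)
  show ?case
  proof (cases "mu = (\<lambda>_. 0)")
    case True then show ?thesis using oxxi[of i] by simp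
  next
    case False
    then have a: "ord (\<lambda>j. 0, \<lambda>j. 0) (mu, mu)" using 2 by blast
    have "ord (\<lambda>j. 0 + mu j, \<lambda>j. 0 + mu j) (\<lambda>j. dl i j + mu j, \<lambda>j. dl i j + mu j)"
      using ocompat[OF oxxi[of i], of mu mu] .
    then have "ord (mu, mu) (\<lambda>j. mu j + dl i j, \<lambda>j. mu j + dl i j)" by (simp add: add.commute)
    then show ?thesis using a otrans by blast
  qed
qed

lemma oa0: "c \<noteq> (\<lambda>_. 0) \<Longrightarrow> ord (c, \<lambda>j. 0) (\<lambda>j. 0, \<lambda>j. 0)"
proof (induction c rule: nat_fun_induct)
  case 1 then show ?case by simp
next
  case (2 mu i)
  show ?case
  proof (cases "mu = (\<lambda>_. 0)")
    case True then show ?thesis using ox[of i] by simp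
  next
    case False
    then have a: "ord (mu, \<lambda>j. 0) (\<lambda>j. 0, \<lambda>j. 0)" using 2 by blast
    have "ord (\<lambda>j. dl i j + mu j, \<lambda>j. 0 + 0) (\<lambda>j. 0 + mu j, \<lambda>j. 0 + 0)"
      using ocompat[OF ox[of i], of mu "\<lambda>_. 0"] .
    then have "ord (\<lambda>j. mu j + dl i j, \<lambda>j. 0) (mu, \<lambda>j. 0)" by (simp add: add.commute)
    then show ?thesis using a otrans by blast
  qed
qed

abbreviation lt where "lt \<equiv> ordh ord"

lemma lt_unfold: "lt (a, b, k) (a', b', k') \<longleftrightarrow>
   deg (a, b, k) < deg (a', b', k') \<or> (deg (a, b, k) = deg (a', b', k') \<and> ord (a, b) (a', b'))"
  by (simp add: ordh_def deg_def)

lemma lt_irr: "\<not> lt e e"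
  by (cases e) (auto simp: lt_unfold irr)

lemma lt_trans: "lt e1 e2 \<Longrightarrow> lt e2 e3 \<Longrightarrow> lt e1 e3"
  by (cases e1; cases e2; cases e3) (auto simp: lt_unfold intro: otrans)

lemma lt_asym: "lt e1 e2 \<Longrightarrow> \<not> lt e2 e1"
  using lt_trans lt_irr by blast

lemma lt_total: "e1 \<noteq> e2 \<Longrightarrow> lt e1 e2 \<or> lt e2 e1"
proof -
  assume ne: "e1 \<noteq> e2"
  obtain a b k where 1: "e1 = (a,b,k)" by (cases e1)
  obtain a' b' k' where 2: "e2 = (a',b',k')" by (cases e2)
  show ?thesis
  proof (cases "deg e1 = deg e2")
    case True
    have "(a,b) \<noteq> (a',b')" using ne True 1 2 by (auto simp: deg_def)
    then show ?thesis using ototal True 1 2 by (auto simp: lt_unfold)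
  next
    case False then show ?thesis using 1 2 by (auto simp: lt_unfold)
  qed
qed

lemma lt_deg: "lt e1 e2 \<Longrightarrow> deg e1 \<le> deg e2"
  by (cases e1; cases e2) (auto simp: lt_unfold)

lemma deg_add: "deg (mexp_add e f) = deg e + deg f"
  by (cases e; cases f) (simp add: deg_def mexp_add_def sum.distrib)

lemma mexp_add_comm: "mexp_add e f = mexp_add f e"
  by (cases e; cases f) (simp add: mexp_add_def add.commute)

lemma mexp_add_cancel: "mexp_add e f = mexp_add e' f \<Longrightarrow> e = e'"
  by (cases e; cases f; cases e') (auto simp: mexp_add_def fun_eq_iff)

lemma lt_add: "lt e e' \<Longrightarrow> lt (mexp_add e f) (mexp_add e' f)"
proof -
  assume a: "lt e e'"
  obtain a b k where e: "e = (a, b, k)" by (cases e)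
  obtain a' b' k' where e': "e' = (a', b', k')" by (cases e')
  obtain c d m where f: "f = (c, d, m)" by (cases f)
  have da: "deg (mexp_add e f) = deg e + deg f" "deg (mexp_add e' f) = deg e' + deg f" by (rule deg_add)+
  show ?thesis using a da ocompat[of a b a' b' c d]
    unfolding e e' f by (auto simp: lt_unfold mexp_add_def)
qed

lemma lt_cancel: "lt (mexp_add e f) (mexp_add e' f) \<Longrightarrow> lt e e'"
  by (metis lt_add lt_total lt_trans lt_irr)

lemma lt_add_iff: "lt (mexp_add e f) (mexp_add e' f) \<longleftrightarrow> lt e e'"
  using lt_add lt_cancel by blast

lemma mono_sub1:
  fixes s :: "nat \<Rightarrow> nat"
  assumes "infinite N"
  shows "\<exists>N' \<subseteq> N. infinite N' \<and> (\<forall>k\<in>N'. \<forall>k'\<in>N'. k < k' \<longrightarrow> s k \<le> s k')"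
proof -
  define N' where "N' = {k\<in>N. \<forall>k'\<in>N. k < k' \<longrightarrow> s k \<le> s k'}"
  have ex: "\<exists>k\<ge>n. k \<in> N'" for n
  proof -
    obtain k0 where k0: "k0 \<in> N" "n \<le> k0" using assms unfolding infinite_nat_iff_unbounded_le by blast
    define m where "m = (LEAST v. \<exists>k\<in>N. n \<le> k \<and> s k = v)"
    have w0: "\<exists>k\<in>N. n \<le> k \<and> s k = s k0" using k0 by (intro bexI[of _ k0]) auto
    have "\<exists>k\<in>N. n \<le> k \<and> s k = m" unfolding m_def
      by (rule LeastI[of _ "s k0"]) (rule w0)
    then obtain k1 where k1: "k1\<in>N \<and> n \<le> k1 \<and> s k1 = m" by blast
    define k where "k = (LEAST k. k\<in>N \<and> n \<le> k \<and> s k = m)"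
    have k: "k\<in>N \<and> n \<le> k \<and> s k = m" unfolding k_def
      by (rule LeastI[of _ k1]) (rule k1)
    have "s k \<le> s k'" if "k' \<in> N" "k < k'" for k'
    proof -
      have w: "\<exists>k\<in>N. n \<le> k \<and> s k = s k'" using that k by (intro bexI[of _ k']) auto
      have "m \<le> s k'" unfolding m_def by (rule Least_le) (rule w)
      then show ?thesis using k by simp
    qed
    then have "k \<in> N'" using k unfolding N'_def by simp
    then show ?thesis using k by blast
  qed
  have "infinite N'" unfolding infinite_nat_iff_unbounded_le using ex by blast
  moreover have "N' \<subseteq> N" unfolding N'_def by auto
  moreover have "\<forall>k\<in>N'. \<forall>k'\<in>N'. k < k' \<longrightarrow> s k \<le> s k'" unfolding N'_def by auto
  ultimately show ?thesis by blast
qed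

lemma mono_subI:
  fixes s :: "'i \<Rightarrow> nat \<Rightarrow> nat"
  assumes "finite I"
  shows "infinite N \<Longrightarrow> \<exists>N' \<subseteq> N. infinite N' \<and> (\<forall>k\<in>N'. \<forall>k'\<in>N'. k < k' \<longrightarrow> (\<forall>i\<in>I. s i k \<le> s i k'))"
  using assms
proof (induction I arbitrary: N rule: finite_induct)
  case empty then show ?case by (intro exI[of _ N]) auto
next
  case (insert x F)
  from insert.IH[OF insert.prems] obtain N1 where N1: "N1 \<subseteq> N" "infinite N1" "\<forall>k\<in>N1. \<forall>k'\<in>N1. k < k' \<longrightarrow> (\<forall>i\<in>F. s i k \<le> s i k')"
    by blast
  obtain N2 where N2: "N2 \<subseteq> N1" "infinite N2" "\<forall>k\<in>N2. \<forall>k'\<in>N2. k < k' \<longrightarrow> s x k \<le> s x k'"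
    using mono_sub1[OF N1(2), of "s x"] by blast
  show ?case
  proof (intro exI[of _ N2] conjI ballI impI)
    show "N2 \<subseteq> N" using N1 N2 by blast
    show "infinite N2" by (rule N2(2))
    fix k k' i assume a: "k\<in>N2" "k'\<in>N2" "k<k'" "i \<in> insert x F"
    show "s i k \<le> s i k'"
    proof (cases "i = x")
      case True then show ?thesis using N2(3) a by blast
    next
      case False then show ?thesis using N1(3) N2(1) a by blast
    qed
  qed
qed

lemma dickson_pair:
  fixes a :: "nat \<Rightarrow> 'n \<Rightarrow> nat" and b :: "nat \<Rightarrow> 'n \<Rightarrow> nat" and k :: "nat \<Rightarrow> nat"
  assumes "infinite N"
  shows "\<exists>i\<in>N. \<exists>j\<in>N. i < j \<and> (\<forall>x. a i x \<le> a j x) \<and> (\<forall>x. b i x \<le> b j x) \<and> k i \<le> k j"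
proof -
  from mono_subI[OF finite_UNIV, of N "\<lambda>x i. a i x"] assms obtain N1 where
    N1: "N1 \<subseteq> N" "infinite N1" "\<forall>i\<in>N1. \<forall>j\<in>N1. i < j \<longrightarrow> (\<forall>x\<in>UNIV. a i x \<le> a j x)"
    by blast
  from mono_subI[OF finite_UNIV, of N1 "\<lambda>x i. b i x"] N1(2) obtain N2 where
    N2: "N2 \<subseteq> N1" "infinite N2" "\<forall>i\<in>N2. \<forall>j\<in>N2. i < j \<longrightarrow> (\<forall>x\<in>UNIV. b i x \<le> b j x)"
    by blast
  from mono_sub1[OF N2(2), of k] obtain N3 where
    N3: "N3 \<subseteq> N2" "infinite N3" "\<forall>i\<in>N3. \<forall>j\<in>N3. i < j \<longrightarrow> k i \<le> k j"
    by blast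
  obtain i where i: "i \<in> N3" using infinite_imp_nonempty[OF N3(2)] by blast
  obtain j where j: "j \<in> N3" "i < j" using N3(2) unfolding infinite_nat_iff_unbounded by blast
  have ij: "i \<in> N" "j \<in> N" using i j N1(1) N2(1) N3(1) by auto
  have "\<forall>x. a i x \<le> a j x" using N1(3) i j N2(1) N3(1) by blast
  moreover have "\<forall>x. b i x \<le> b j x" using N2(3) i j N3(1) by blast
  moreover have "k i \<le> k j" using N3(3) i j by blast
  ultimately show ?thesis using ij j(2) by blast
qed

definition Rel :: "nat \<Rightarrow> ('n mexp \<times> 'n mexp) set" where
  "Rel D = {(e', e). deg e' \<le> D \<and> lt e e'}"

lemma no_chain:
  assumes ch: "\<forall>i. lt (s i) (s (Suc i))" and bd: "\<forall>i. deg (s i) \<le> D"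
  shows False
proof -
  have chl: "i < j \<Longrightarrow> lt (s i) (s j)" for i j
  proof (induction j)
    case 0 then show ?case by simp
  next
    case (Suc j) then show ?case using ch lt_trans by (metis less_Suc_eq)
  qed
  have mono: "i \<le> j \<Longrightarrow> deg (s i) \<le> deg (s j)" for i j
    using chl lt_deg by (metis le_eq_less_or_eq)
  have fin: "finite (range (\<lambda>i. deg (s i)))"
    by (rule finite_subset[of _ "{..D}"]) (use bd in auto)
  define M where "M = Max (range (\<lambda>i. deg (s i)))"
  have "M \<in> range (\<lambda>i. deg (s i))" unfolding M_def using fin by (intro Max_in) auto
  then obtain i0 where i0M: "deg (s i0) = M" by auto
  have i0: "\<forall>i. deg (s i) \<le> deg (s i0)" unfolding i0M M_def using fin by (auto intro: Max_ge)
  define N where "N = {i. i0 \<le> i}"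
  have infN: "infinite N" unfolding N_def using infinite_Ici[of i0] by (simp add: atLeast_def)
  have dN: "i \<in> N \<Longrightarrow> deg (s i) = deg (s i0)" for i using mono i0 unfolding N_def by (simp add: le_antisym)
  obtain i j where ij: "i \<in> N" "j \<in> N" "i < j"
     "\<forall>x. fst (s i) x \<le> fst (s j) x" "\<forall>x. fst (snd (s i)) x \<le> fst (snd (s j)) x"
     "snd (snd (s i)) \<le> snd (snd (s j))"
    using dickson_pair[OF infN, of "\<lambda>i. fst (s i)" "\<lambda>i. fst (snd (s i))" "\<lambda>i. snd (snd (s i))"] by blast
  obtain a b k where si: "s i = (a, b, k)" by (cases "s i")
  obtain a' b' k' where sj: "s j = (a', b', k')" by (cases "s j")
  have le: "\<forall>x. a x \<le> a' x" "\<forall>x. b x \<le> b' x" "k \<le> k'" using ij si sj by auto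
  have deq: "(\<Sum>x\<in>UNIV. b x) + k = (\<Sum>x\<in>UNIV. b' x) + k'" using dN[OF ij(1)] dN[OF ij(2)] si sj by (simp add: deg_def)
  have sle: "(\<Sum>x\<in>UNIV. b x) \<le> (\<Sum>x\<in>UNIV. b' x)" using le by (simp add: sum_mono)
  have kk: "k = k'" using deq sle le by linarith
  have "(\<Sum>x\<in>UNIV. b x) = (\<Sum>x\<in>UNIV. b' x)" using deq kk by simp
  then have "b x = b' x" for x by (rule sum_mono_inv) (use le(2) in auto)
  then have bb: "b = b'" by auto
  have lij: "lt (s i) (s j)" using chl ij by blast
  show False
  proof (cases "a = a'")
    case True then show ?thesis using lij si sj bb kk lt_irr by simp
  next
    case False
    define c where "c = (\<lambda>x. a' x - a x)"
    have "c \<noteq> (\<lambda>_. 0)" using False le unfolding c_def by (auto simp: fun_eq_iff intro: le_antisym)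
    from ocompat[OF oa0[OF this], of a b] have "ord (\<lambda>x. c x + a x, b) (a, b)" by simp
    moreover have "(\<lambda>x. c x + a x) = a'" using le unfolding c_def by (auto simp: fun_eq_iff)
    ultimately have "ord (a', b) (a, b)" by simp
    then have "lt (s j) (s i)" using si sj bb kk by (simp add: lt_unfold deg_def)
    then show False using lij lt_asym by blast
  qed
qed

lemma wf_Rel: "wf (Rel D)"
proof (rule ccontr)
  assume "\<not> wf (Rel D)"
  then obtain f where f: "\<forall>i. (f (Suc i), f i) \<in> Rel D" using wf_iff_no_infinite_down_chain by blast
  show False
    by (rule no_chain[of "\<lambda>i. f (Suc i)" D]) (use f in \<open>auto simp: Rel_def\<close>)
qed

lemma max_exists:
  assumes "S \<noteq> {}" "\<forall>e\<in>S. deg e \<le> D"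
  shows "\<exists>e\<in>S. \<forall>e'\<in>S. e' \<noteq> e \<longrightarrow> lt e' e"
proof -
  from assms(1) obtain x where x: "x \<in> S" by blast
  from wfE_min[OF wf_Rel[of D] x] obtain z where z: "z \<in> S" "\<And>y. (y, z) \<in> Rel D \<Longrightarrow> y \<notin> S" by blast
  have "lt e' z" if "e' \<in> S" "e' \<noteq> z" for e'
  proof -
    have "\<not> lt z e'" using z(2)[of e'] that assms(2) unfolding Rel_def by auto
    then show ?thesis using lt_total that(2) by blast
  qed
  then show ?thesis using z(1) by blast
qed

end



locale coef =
  fixes Q :: "'c::idom set" and h :: 'c
  assumes Qprime: "is_prime_ideal Q" and hQ: "h \<notin> Q"
begin

lemma Q0: "0 \<in> Q" using Qprime by (simp add: is_prime_ideal_def is_ideal_def)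
lemma Qadd: "a \<in> Q \<Longrightarrow> b \<in> Q \<Longrightarrow> a + b \<in> Q" using Qprime by (simp add: is_prime_ideal_def is_ideal_def)
lemma Qmult: "a \<in> Q \<Longrightarrow> r * a \<in> Q" using Qprime by (simp add: is_prime_ideal_def is_ideal_def)
lemma Qmult2: "a \<in> Q \<Longrightarrow> a * r \<in> Q" using Qmult by (metis mult.commute)
lemma Qminus: "a \<in> Q \<Longrightarrow> - a \<in> Q" using Qmult[of a "-1"] by simp
lemma Qdiff: "a \<in> Q \<Longrightarrow> b \<in> Q \<Longrightarrow> a - b \<in> Q" using Qadd Qminus by (metis diff_conv_add_uminus)
lemma Qprime': "a * b \<in> Q \<Longrightarrow> a \<in> Q \<or> b \<in> Q" using Qprime by (simp add: is_prime_ideal_def)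
lemma Q1: "1 \<notin> Q" using Qprime by (simp add: is_prime_ideal_def)
lemma h0: "h \<noteq> 0" using hQ Q0 by auto
lemma hpow: "h ^ l \<notin> Q"
  by (induction l) (auto simp: Q1 hQ dest: Qprime')
lemma hpow0: "h ^ l \<noteq> 0" using h0 by simp

abbreviation "L \<equiv> loc_h h"
abbreviation "LQ \<equiv> locQ_h Q h"
abbreviation "CQ \<equiv> coeffQ Q"

lemma L_add: "x \<in> L \<Longrightarrow> y \<in> L \<Longrightarrow> x + y \<in> L"
  unfolding loc_h_def using hpow0 by (auto simp: power_add[symmetric]) blast

lemma L_mult: "x \<in> L \<Longrightarrow> y \<in> L \<Longrightarrow> x * y \<in> L"
  unfolding loc_h_def by (auto simp: power_add[symmetric]) blast

lemma L_uminus: "x \<in> L \<Longrightarrow> - x \<in> L"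
proof -
  assume "x \<in> L"
  then obtain c l where "x = Fract c (h ^ l)" unfolding loc_h_def by blast
  then have "- x = Fract (- c) (h ^ l)" by simp
  then show ?thesis unfolding loc_h_def by blast
qed

lemma L_diff: "x \<in> L \<Longrightarrow> y \<in> L \<Longrightarrow> x - y \<in> L"
  using L_add L_uminus by (metis diff_conv_add_uminus)

lemma L_of_nat: "of_nat n \<in> L"
  unfolding loc_h_def by (rule CollectI, rule exI[of _ "of_nat n"], rule exI[of _ 0]) (simp add: of_nat_fract)

lemma L_0: "0 \<in> L" using L_of_nat[of 0] by simp

lemma L_sum: "(\<And>x. x \<in> A \<Longrightarrow> f x \<in> L) \<Longrightarrow> sum f A \<in> L"
  by (induction A rule: infinite_finite_induct) (auto simp: L_0 L_add)

lemma LQ_L: "x \<in> LQ \<Longrightarrow> x \<in> L"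
  unfolding loc_h_def locQ_h_def by auto

lemma LQ_add: "x \<in> LQ \<Longrightarrow> y \<in> LQ \<Longrightarrow> x + y \<in> LQ"
  unfolding locQ_h_def using hpow0
  by (auto simp: power_add[symmetric]) (metis Qadd Qmult2)

lemma LQ_uminus: "x \<in> LQ \<Longrightarrow> - x \<in> LQ"
proof -
  assume "x \<in> LQ"
  then obtain c l where "c \<in> Q" "x = Fract c (h ^ l)" unfolding locQ_h_def by blast
  then have "- c \<in> Q" "- x = Fract (- c) (h ^ l)" using Qminus by auto
  then show ?thesis unfolding locQ_h_def by blast
qed

lemma LQ_diff: "x \<in> LQ \<Longrightarrow> y \<in> LQ \<Longrightarrow> x - y \<in> LQ"
  using LQ_add LQ_uminus by (metis diff_conv_add_uminus)

lemma LQ_0: "0 \<in> LQ"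
  unfolding locQ_h_def using Q0 by (auto intro!: bexI[of _ 0] exI[of _ 0] simp: fract_collapse)

lemma LQ_sum: "(\<And>x. x \<in> A \<Longrightarrow> f x \<in> LQ) \<Longrightarrow> sum f A \<in> LQ"
  by (induction A rule: infinite_finite_induct) (auto simp: LQ_0 LQ_add)

lemma LQ_mult: "x \<in> L \<Longrightarrow> y \<in> LQ \<Longrightarrow> x * y \<in> LQ"
  unfolding loc_h_def locQ_h_def by (auto simp: power_add[symmetric]) (metis Qmult)

lemma LQ_mult2: "x \<in> LQ \<Longrightarrow> y \<in> L \<Longrightarrow> x * y \<in> LQ"
  using LQ_mult by (metis mult.commute)

lemma CQ_0: "0 \<in> CQ"
proof -
  have "0 = Fract (0::'c) 1" by (simp add: fract_collapse)
  then show ?thesis unfolding coeffQ_def using Q0 Q1 by blast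
qed

lemma LQ_CQ: "x \<in> LQ \<Longrightarrow> x \<in> CQ"
  unfolding locQ_h_def coeffQ_def using hpow by blast

lemma L_CQ: assumes "x \<in> L" "x \<in> CQ" shows "x \<in> LQ"
proof -
  obtain c l where x: "x = Fract c (h ^ l)" using assms(1) unfolding loc_h_def by blast
  obtain d d' where d: "d \<in> Q" "d' \<notin> Q" "x = Fract d d'" using assms(2) unfolding coeffQ_def by blast
  have "d' \<noteq> 0" using d Q0 by auto
  then have "c * d' = d * h ^ l" using x d(3) hpow0 by (simp add: eq_fract)
  then have "c * d' \<in> Q" using d(1) Qmult2 by metis
  then have "c \<in> Q" using d(2) Qprime' by blast
  then show ?thesis using x unfolding locQ_h_def by blast
qed

lemma L_notLQ: "x \<in> L \<Longrightarrow> x \<notin> LQ \<Longrightarrow> x \<notin> CQ" using L_CQ by blast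

lemma nonQ_mult:
  assumes "x \<in> L" "y \<in> L" "x \<notin> CQ" "y \<notin> CQ" shows "x * y \<notin> CQ"
proof
  assume xy: "x * y \<in> CQ"
  obtain c l where x: "x = Fract c (h ^ l)" using assms(1) unfolding loc_h_def by blast
  obtain c' l' where y: "y = Fract c' (h ^ l')" using assms(2) unfolding loc_h_def by blast
  have c: "c \<notin> Q" using assms(3) x LQ_CQ unfolding locQ_h_def by blast
  have c': "c' \<notin> Q" using assms(4) y LQ_CQ unfolding locQ_h_def by blast
  obtain d d' where d: "d \<in> Q" "d' \<notin> Q" "x * y = Fract d d'" using xy unfolding coeffQ_def by blast
  have "d' \<noteq> 0" using d Q0 by auto
  moreover have "x * y = Fract (c * c') (h ^ (l + l'))" using x y by (simp add: power_add)
  ultimately have "c * c' * d' = d * h ^ (l + l')" using d(3) hpow0 by (simp add: eq_fract)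
  then have "c * c' * d' \<in> Q" using d(1) Qmult2 by metis
  then show False using c c' d(2) Qprime' by blast
qed

lemma inv_lc:
  assumes "lc_num_dvd Q u h" "u \<notin> CQ" shows "inverse u \<in> L"
proof -
  obtain c c' where cc: "c' \<notin> Q" "u = Fract c c'" "c dvd h" using assms(1) unfolding lc_num_dvd_def by blast
  obtain m where m: "h = c * m" using cc(3) by (auto elim: dvdE)
  have m0: "m \<noteq> 0" using m h0 by auto
  have "inverse u = Fract c' c" using cc by simp
  also have "\<dots> = Fract (m * c') (m * c)" using m0 by (simp add: mult_fract_cancel)
  also have "\<dots> = Fract (m * c') (h ^ 1)" using m by (simp add: mult.commute)
  finally show ?thesis unfolding loc_h_def by blast
qed

lemma CQ_ne0: "u \<notin> CQ \<Longrightarrow> u \<noteq> 0" using CQ_0 by auto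

end



type_synonym 'n tup = "('n \<Rightarrow> nat) \<times> ('n \<Rightarrow> nat) \<times> nat \<times> ('n \<Rightarrow> nat) \<times> ('n \<Rightarrow> nat) \<times> nat \<times> ('n \<Rightarrow> nat)"

definition bnd :: "('n::finite, 'f::zero) dop \<Rightarrow> nat \<Rightarrow> bool" where
  "bnd P D \<longleftrightarrow> (\<forall>a b k. P a b k \<noteq> 0 \<longrightarrow> deg (a, b, k) \<le> D)"

lemma finite_bfun: "finite {f :: 'n::finite \<Rightarrow> nat. \<forall>i. f i \<le> c i}"
proof -
  have "{f :: 'n \<Rightarrow> nat. \<forall>i. f i \<le> c i} = Pi\<^sub>E UNIV (\<lambda>i. {..c i})"
    by (auto simp: PiE_UNIV_domain Pi_def)
  then show ?thesis by (simp add: finite_PiE)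
qed

lemma wf_bnd:
  fixes P :: "('n::finite, 'f::zero) dop"
  shows "wf_dop P \<longleftrightarrow> (\<exists>D. bnd P D)"
proof
  assume w: "wf_dop P"
  let ?S = "{(b, k). \<exists>a. P a b k \<noteq> 0}"
  have fin: "finite ?S" using w by (simp add: wf_dop_def)
  define D where "D = Max ((\<lambda>(b, k). (\<Sum>i\<in>UNIV. b i) + k) ` ?S)"
  have "bnd P D" unfolding bnd_def
  proof (intro allI impI)
    fix a b k assume "P a b k \<noteq> 0"
    then have "(b, k) \<in> ?S" by blast
    then have "(\<Sum>i\<in>UNIV. b i) + k \<in> (\<lambda>(b, k). (\<Sum>i\<in>UNIV. b i) + k) ` ?S" by force
    then show "deg (a, b, k) \<le> D" unfolding D_def deg_def using fin by simp
  qed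
  then show "\<exists>D. bnd P D" by blast
next
  assume "\<exists>D. bnd P D"
  then obtain D where D: "bnd P D" by blast
  have "{(b, k). \<exists>a. P a b k \<noteq> 0} \<subseteq> {b. \<forall>i. b i \<le> D} \<times> {..D}"
  proof
    fix x assume "x \<in> {(b, k). \<exists>a. P a b k \<noteq> 0}"
    then obtain a b k where x: "x = (b, k)" "P a b k \<noteq> 0" by blast
    then have d: "(\<Sum>i\<in>UNIV. b i) + k \<le> D" using D by (auto simp: bnd_def deg_def)
    have "b i \<le> D" for i using d member_le_sum[of i UNIV b] by simp
    then show "x \<in> {b. \<forall>i. b i \<le> D} \<times> {..D}" using x d by auto
  qed
  moreover have "finite ({b::'n \<Rightarrow> nat. \<forall>i. b i \<le> D} \<times> {..D})"
    using finite_bfun[of "\<lambda>_. D"] by (intro finite_cartesian_product) auto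
  ultimately show "wf_dop P" unfolding wf_dop_def by (rule finite_subset)
qed

lemma bnd_mono: "bnd P D \<Longrightarrow> D \<le> D' \<Longrightarrow> bnd P D'"
  unfolding bnd_def by force

definition summ :: "('n::finite, 'f::field) dop \<Rightarrow> ('n, 'f) dop \<Rightarrow> 'n tup \<Rightarrow> 'f" where
  "summ P Q = (\<lambda>(al, be, k, ga, de, l, mu). P al be k * Q ga de l *
       of_nat (\<Prod>i\<in>UNIV. (be i choose mu i) * (fact (ga i) div fact (ga i - mu i))))"

definition DS :: "('n::finite, 'f::field) dop \<Rightarrow> ('n, 'f) dop \<Rightarrow> ('n \<Rightarrow> nat) \<Rightarrow> ('n \<Rightarrow> nat) \<Rightarrow> nat \<Rightarrow> 'n tup set" where
  "DS P Q a b m = {(al, be, k, ga, de, l, mu).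
          (\<forall>i. mu i \<le> be i \<and> mu i \<le> ga i \<and> al i + (ga i - mu i) = a i \<and> be i - mu i + de i = b i)
          \<and> k + l + (\<Sum>i\<in>UNIV. mu i) = m \<and> P al be k \<noteq> 0 \<and> Q ga de l \<noteq> 0}"

lemma dmult_DS: "dmult P Q a b m = sum (summ P Q) (DS P Q a b m)"
  unfolding dmult_def summ_def DS_def by (rule refl)

definition shp :: "('n::finite \<Rightarrow> nat) \<Rightarrow> ('n \<Rightarrow> nat) \<Rightarrow> nat \<Rightarrow> 'n tup \<Rightarrow> bool" where
  "shp a b m = (\<lambda>(al, be, k, ga, de, l, mu).
          (\<forall>i. mu i \<le> be i \<and> mu i \<le> ga i \<and> al i + (ga i - mu i) = a i \<and> be i - mu i + de i = b i)
          \<and> k + l + (\<Sum>i\<in>UNIV. mu i) = m)"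

definition fpart :: "'n tup \<Rightarrow> 'n mexp" where "fpart = (\<lambda>(al, be, k, ga, de, l, mu). (al, be, k))"
definition gpart :: "'n tup \<Rightarrow> 'n mexp" where "gpart = (\<lambda>(al, be, k, ga, de, l, mu). (ga, de, l))"
definition mupart :: "'n tup \<Rightarrow> 'n \<Rightarrow> nat" where "mupart = (\<lambda>(al, be, k, ga, de, l, mu). mu)"
definition cc :: "'n::finite tup \<Rightarrow> nat" where
  "cc = (\<lambda>(al, be, k, ga, de, l, mu). (\<Prod>i\<in>UNIV. (be i choose mu i) * (fact (ga i) div fact (ga i - mu i))))"

definition cf :: "('n, 'f) dop \<Rightarrow> 'n mexp \<Rightarrow> 'f" where "cf P = (\<lambda>(a, b, k). P a b k)"

lemma cf_simp [simp]: "cf P (a, b, k) = P a b k" by (simp add: cf_def)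

lemma summ_eq: "summ P Q t = cf P (fpart t) * cf Q (gpart t) * of_nat (cc t)"
  by (cases t) (simp add: summ_def fpart_def gpart_def cc_def)

lemma DS_iff: "t \<in> DS P Q a b m \<longleftrightarrow> shp a b m t \<and> cf P (fpart t) \<noteq> 0 \<and> cf Q (gpart t) \<noteq> 0"
  by (cases t) (simp add: DS_def shp_def fpart_def gpart_def)

definition TS :: "('n::finite \<Rightarrow> nat) \<Rightarrow> ('n \<Rightarrow> nat) \<Rightarrow> nat \<Rightarrow> nat \<Rightarrow> 'n tup set" where
  "TS a b m D = {t. shp a b m t \<and> deg (fpart t) \<le> D}"

lemma finite_TS:
  fixes a :: "'n::finite \<Rightarrow> nat"
  shows "finite (TS a b m D)"
proof -
  define F where "F = (\<lambda>(al::'n\<Rightarrow>nat, be::'n\<Rightarrow>nat, k::nat, mu::'n\<Rightarrow>nat).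
      (al, be, k, \<lambda>i. a i - al i + mu i, \<lambda>i. b i - (be i - mu i), m - k - (\<Sum>i\<in>UNIV. mu i), mu))"
  define A where "A = {al. \<forall>i. al i \<le> a i} \<times> {be::'n\<Rightarrow>nat. \<forall>i. be i \<le> D} \<times> {..D} \<times> {mu::'n\<Rightarrow>nat. \<forall>i. mu i \<le> D}"
  have "finite A" unfolding A_def using finite_bfun[of a] finite_bfun[of "\<lambda>_. D"]
    by (intro finite_cartesian_product) auto
  moreover have "TS a b m D \<subseteq> F ` A"
  proof
    fix t assume t: "t \<in> TS a b m D"
    obtain al be k ga de l mu where te: "t = (al, be, k, ga, de, l, mu)" by (cases t)
    have s: "\<forall>i. mu i \<le> be i \<and> mu i \<le> ga i \<and> al i + (ga i - mu i) = a i \<and> be i - mu i + de i = b i"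
       "k + l + (\<Sum>i\<in>UNIV. mu i) = m" and d: "(\<Sum>i\<in>UNIV. be i) + k \<le> D"
      using t te by (auto simp: TS_def shp_def fpart_def deg_def)
    have bei: "be i \<le> D" for i using d member_le_sum[of i UNIV be] by simp
    have g1: "ga i = a i - al i + mu i" for i using spec[OF s(1), of i] by arith
    have g2: "de i = b i - (be i - mu i)" for i using spec[OF s(1), of i] by arith
    have g3: "l = m - k - (\<Sum>i\<in>UNIV. mu i)" using s(2) by arith
    have tF: "t = F (al, be, k, mu)"
      unfolding te F_def using g1 g2 g3 by (simp add: fun_eq_iff)
    have "al i \<le> a i" for i using spec[OF s(1), of i] by arith
    moreover have "mu i \<le> D" for i using spec[OF s(1), of i] bei[of i] by arith
    moreover have "k \<le> D" using d by arith
    ultimately have "(al, be, k, mu) \<in> A" unfolding A_def using bei by auto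
    then show "t \<in> F ` A" using tF by blast
  qed
  ultimately show ?thesis by (rule finite_surj)
qed

lemma dmult_TS:
  assumes "bnd P D"
  shows "dmult P Q a b m = (\<Sum>t\<in>TS a b m D. summ P Q t)"
proof -
  have sub: "DS P Q a b m \<subseteq> TS a b m D"
  proof
    fix t assume "t \<in> DS P Q a b m"
    then have "shp a b m t" "cf P (fpart t) \<noteq> 0" by (auto simp: DS_iff)
    moreover obtain x y z where "fpart t = (x, y, z)" by (cases "fpart t")
    ultimately show "t \<in> TS a b m D" using assms by (auto simp: TS_def bnd_def)
  qed
  have z: "\<forall>t\<in>TS a b m D - DS P Q a b m. summ P Q t = 0"
    by (auto simp: TS_def DS_iff summ_eq)
  show ?thesis unfolding dmult_DS by (rule sum.mono_neutral_left[OF finite_TS sub z])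
qed

lemma shp_deg:
  assumes "shp a b m t"
  shows "deg (a, b, m) = deg (fpart t) + deg (gpart t)"
proof -
  obtain al be k ga de l mu where te: "t = (al, be, k, ga, de, l, mu)" by (cases t)
  have s: "\<forall>i. mu i \<le> be i \<and> mu i \<le> ga i \<and> al i + (ga i - mu i) = a i \<and> be i - mu i + de i = b i"
       "k + l + (\<Sum>i\<in>UNIV. mu i) = m" using assms te by (auto simp: shp_def)
  have "(\<Sum>i\<in>UNIV. b i) = (\<Sum>i\<in>UNIV. be i - mu i) + (\<Sum>i\<in>UNIV. de i)"
    using s by (simp add: sum.distrib[symmetric])
  also have "(\<Sum>i\<in>UNIV. be i - mu i) = (\<Sum>i\<in>UNIV. be i) - (\<Sum>i\<in>UNIV. mu i)"
    using s by (intro sum_subtractf_nat) auto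
  finally have "(\<Sum>i\<in>UNIV. b i) = (\<Sum>i\<in>UNIV. be i) - (\<Sum>i\<in>UNIV. mu i) + (\<Sum>i\<in>UNIV. de i)" .
  moreover have "(\<Sum>i\<in>UNIV. mu i) \<le> (\<Sum>i\<in>UNIV. be i)" using s by (intro sum_mono) auto
  ultimately show ?thesis using s te by (simp add: deg_def fpart_def gpart_def)
qed

lemma bnd_dmult:
  assumes "bnd P D1" "bnd Q D2" shows "bnd (dmult P Q) (D1 + D2)"
  unfolding bnd_def
proof (intro allI impI)
  fix a b m assume "dmult P Q a b m \<noteq> 0"
  then obtain t where t: "t \<in> DS P Q a b m" unfolding dmult_DS by (meson sum.neutral)
  then have s: "shp a b m t" "cf P (fpart t) \<noteq> 0" "cf Q (gpart t) \<noteq> 0" by (auto simp: DS_iff)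
  obtain x y z where f: "fpart t = (x, y, z)" by (cases "fpart t")
  obtain x' y' z' where g: "gpart t = (x', y', z')" by (cases "gpart t")
  have "deg (fpart t) \<le> D1" "deg (gpart t) \<le> D2" using s(2,3) assms f g by (auto simp: bnd_def)
  then show "deg (a, b, m) \<le> D1 + D2" using shp_deg[OF s(1)] by simp
qed

lemma cc_mu0: "mupart t = (\<lambda>_. 0) \<Longrightarrow> cc t = 1"
  by (cases t) (simp add: mupart_def cc_def)

context adm_ord
begin

lemma shp_tgt:
  assumes "shp a b m t"
  shows "(mupart t = (\<lambda>_. 0) \<longrightarrow> (a, b, m) = mexp_add (fpart t) (gpart t)) \<and>
         (mupart t \<noteq> (\<lambda>_. 0) \<longrightarrow> lt (a, b, m) (mexp_add (fpart t) (gpart t)))"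
proof -
  obtain al be k ga de l mu where te: "t = (al, be, k, ga, de, l, mu)" by (cases t)
  have s: "\<forall>i. mu i \<le> be i \<and> mu i \<le> ga i \<and> al i + (ga i - mu i) = a i \<and> be i - mu i + de i = b i"
       "k + l + (\<Sum>i\<in>UNIV. mu i) = m" using assms te by (auto simp: shp_def)
  have dd: "deg (a, b, m) = deg (mexp_add (fpart t) (gpart t))" by (simp only: shp_deg[OF assms] deg_add)
  have A1: "mu i + a i = al i + ga i" "mu i + b i = be i + de i" for i
    using spec[OF s(1), of i] by arith+
  have A: "(\<lambda>i. mu i + a i) = (\<lambda>i. al i + ga i)" "(\<lambda>i. mu i + b i) = (\<lambda>i. be i + de i)"
    using A1 by auto
  show ?thesis
  proof (intro conjI impI)
    assume "mupart t = (\<lambda>_. 0)"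
    then have "mu = (\<lambda>_. 0)" using te by (simp add: mupart_def)
    then show "(a, b, m) = mexp_add (fpart t) (gpart t)"
      using s te by (auto simp: fun_eq_iff mexp_add_def fpart_def gpart_def)
  next
    assume "mupart t \<noteq> (\<lambda>_. 0)"
    then have "mu \<noteq> (\<lambda>_. 0)" using te by (simp add: mupart_def)
    from ocompat[OF omumu[OF this], of a b]
    have "ord (a, b) (\<lambda>i. mu i + a i, \<lambda>i. mu i + b i)" by simp
    then have "ord (a, b) (\<lambda>i. al i + ga i, \<lambda>i. be i + de i)" using A by simp
    then show "lt (a, b, m) (mexp_add (fpart t) (gpart t))"
      using dd te by (simp add: lt_unfold mexp_add_def fpart_def gpart_def)
  qed
qed

end



lemma mem_NQ: "e \<in> {(a, b, k). P a b k \<notin> C} \<longleftrightarrow> cf P e \<notin> C" by (cases e) simp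

lemma cf_lam [simp]: "cf (\<lambda>a b k. F (a, b, k)) e = F e" by (cases e) simp

lemma bnd_cf: "bnd P D \<Longrightarrow> cf P e \<noteq> 0 \<Longrightarrow> deg e \<le> D"
  by (cases e) (auto simp: bnd_def)

lemma bnd_diff: fixes P Q :: "('n::finite, 'f::ab_group_add) dop" assumes "bnd P D" "bnd Q D" shows "bnd (\<lambda>a b k. P a b k - Q a b k) D"
  unfolding bnd_def
proof (intro allI impI)
  fix a b k assume "P a b k - Q a b k \<noteq> 0"
  then have "P a b k \<noteq> 0 \<or> Q a b k \<noteq> 0" by auto
  then show "deg (a, b, k) \<le> D" using assms unfolding bnd_def by blast
qed

lemma bnd_sum: assumes "\<And>j. j < r \<Longrightarrow> bnd (F j) D" shows "bnd (\<lambda>a b k. \<Sum>j<r. F j a b k) D"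
  unfolding bnd_def
proof (intro allI impI)
  fix a b k assume "(\<Sum>j<r. F j a b k) \<noteq> 0"
  then obtain j where "j < r" "F j a b k \<noteq> 0" by (meson lessThan_iff sum.not_neutral_contains_not_neutral)
  then show "deg (a,b,k) \<le> D" using assms unfolding bnd_def by blast
qed

lemma Delta_disj: "j < k \<Longrightarrow> x \<in> Delta e j \<Longrightarrow> x \<in> Delta e k \<Longrightarrow> False"
  unfolding Delta_def by blast

lemma Delta_bar_iff: "x \<in> Delta_bar e r \<longleftrightarrow> \<not> (\<exists>j<r. x \<in> Delta e j)"
  unfolding Delta_bar_def by blast

lemma mexp_add_comm': "mexp_add e f = mexp_add f e"
  by (cases e; cases f) (simp add: mexp_add_def add.commute)

lemma Delta_cone: "x \<in> Delta e j \<Longrightarrow> \<exists>f. x = mexp_add f (e j)"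
  unfolding Delta_def cone_def using mexp_add_comm' by blast

locale setting = adm_ord ord + coef Q h
  for ord :: "('n::finite \<Rightarrow> nat) \<times> ('n \<Rightarrow> nat) \<Rightarrow> ('n \<Rightarrow> nat) \<times> ('n \<Rightarrow> nat) \<Rightarrow> bool"
  and Q :: "'c::idom set" and h :: 'c +
  fixes r :: nat and g :: "nat \<Rightarrow> ('n, 'c fract) dop"
  assumes g_in: "\<forall>j<r. g j \<in> dop_over (loc_h h) - dop_over (locQ_h Q h)"
    and g_lc: "\<forall>j<r. lc_num_dvd Q (lc_modQ ord Q (g j)) h"
begin

abbreviation ee where "ee \<equiv> \<lambda>i. exp_modQ ord Q (g i)"
definition lc where "lc j = cf (g j) (ee j)"

lemma g_L: "j < r \<Longrightarrow> cf (g j) e \<in> L"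
  using g_in by (cases e) (auto simp: dop_over_def)

lemma g_bnd: "j < r \<Longrightarrow> \<exists>D. bnd (g j) D"
proof -
  assume j: "j < r"
  have "wf_dop (g j)" using g_in j by (simp add: dop_over_def)
  then show ?thesis using wf_bnd by blast
qed

lemma ee_prop:
  assumes j: "j < r"
  shows "cf (g j) (ee j) \<notin> CQ \<and> (\<forall>e'. cf (g j) e' \<notin> CQ \<longrightarrow> e' \<noteq> ee j \<longrightarrow> lt e' (ee j))"
proof -
  have gL: "g j \<in> dop_over L" and gQ: "g j \<notin> dop_over LQ" using g_in j by auto
  obtain D where D: "bnd (g j) D" using g_bnd j by blast
  define NQ where "NQ = {(a, b, k). g j a b k \<notin> coeffQ Q}"
  have "wf_dop (g j)" using gL by (simp add: dop_over_def)
  then obtain a b k where "g j a b k \<notin> LQ" using gQ by (auto simp: dop_over_def)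
  moreover have "g j a b k \<in> L" using gL by (simp add: dop_over_def)
  ultimately have "(a, b, k) \<in> NQ" using L_CQ unfolding NQ_def by blast
  then have ne: "NQ \<noteq> {}" by blast
  have bd: "\<forall>e\<in>NQ. deg e \<le> D"
  proof
    fix e assume "e \<in> NQ"
    then have "cf (g j) e \<notin> CQ" by (cases e) (simp add: NQ_def)
    then have "cf (g j) e \<noteq> 0" using CQ_0 by auto
    then show "deg e \<le> D" using bnd_cf[OF D] by blast
  qed
  obtain e0 where e0: "e0 \<in> NQ" "\<forall>e'\<in>NQ. e' \<noteq> e0 \<longrightarrow> lt e' e0" using max_exists[OF ne bd] by blast
  have "exp_modQ ord Q (g j) = e0"
    unfolding exp_modQ_def NQ_def[symmetric]
  proof (rule the_equality)
    show "e0 \<in> NQ \<and> (\<forall>e'\<in>NQ. e' \<noteq> e0 \<longrightarrow> lt e' e0)" using e0 by blast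
  next
    fix e assume e: "e \<in> NQ \<and> (\<forall>e'\<in>NQ. e' \<noteq> e \<longrightarrow> lt e' e)"
    show "e = e0"
    proof (rule ccontr)
      assume "e \<noteq> e0"
      then have "lt e e0" "lt e0 e" using e e0 by auto
      then show False using lt_asym by blast
    qed
  qed
  then show ?thesis using e0 unfolding NQ_def mem_NQ by auto
qed

lemma lc_nonQ: "j < r \<Longrightarrow> lc j \<notin> CQ" using ee_prop by (simp add: lc_def)
lemma lc_L: "j < r \<Longrightarrow> lc j \<in> L" using g_L by (simp add: lc_def)
lemma lc_ne0: "j < r \<Longrightarrow> lc j \<noteq> 0" using lc_nonQ CQ_ne0 by blast
lemma lc_modQ_eq: "lc_modQ ord Q (g j) = lc j"
  by (cases "ee j") (simp add: lc_modQ_def lc_def)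
lemma ilc_L: "j < r \<Longrightarrow> inverse (lc j) \<in> L"
  using inv_lc g_lc lc_nonQ lc_modQ_eq by metis

lemma KEY:
  assumes j: "j < r" and s: "shp a b m t" and nq: "cf (g j) (gpart t) \<notin> CQ"
  shows "((a, b, m) = mexp_add (fpart t) (ee j) \<and> mupart t = (\<lambda>_. 0) \<and> gpart t = ee j)
         \<or> lt (a, b, m) (mexp_add (fpart t) (ee j))"
proof -
  have ge: "gpart t = ee j \<or> lt (gpart t) (ee j)" using ee_prop[OF j] nq by blast
  have T: "(mupart t = (\<lambda>_. 0) \<longrightarrow> (a, b, m) = mexp_add (fpart t) (gpart t)) \<and>
         (mupart t \<noteq> (\<lambda>_. 0) \<longrightarrow> lt (a, b, m) (mexp_add (fpart t) (gpart t)))"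
    by (rule shp_tgt[OF s])
  show ?thesis
  proof (cases "gpart t = ee j")
    case True
    then show ?thesis using T by auto
  next
    case False
    then have "lt (gpart t) (ee j)" using ge by blast
    then have l: "lt (mexp_add (fpart t) (gpart t)) (mexp_add (fpart t) (ee j))"
      using lt_add mexp_add_comm by metis
    show ?thesis
    proof (cases "mupart t = (\<lambda>_. 0)")
      case True then show ?thesis using T l by auto
    next
      case False then show ?thesis using T l lt_trans by blast
    qed
  qed
qed

lemma term_LQ:
  assumes j: "j < r" and s: "shp a b m t" and x: "x \<in> L"
    and c: "lt (mexp_add (fpart t) (ee j)) (a, b, m) \<or>
            ((a, b, m) = mexp_add (fpart t) (ee j) \<and> \<not> (mupart t = (\<lambda>_. 0) \<and> gpart t = ee j))"
  shows "x * cf (g j) (gpart t) * of_nat (cc t) \<in> LQ"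
proof -
  have "cf (g j) (gpart t) \<in> CQ"
  proof (rule ccontr)
    assume "cf (g j) (gpart t) \<notin> CQ"
    from KEY[OF j s this] c show False using lt_asym lt_irr by metis
  qed
  then have "cf (g j) (gpart t) \<in> LQ" using L_CQ g_L[OF j] by blast
  then have "x * cf (g j) (gpart t) \<in> LQ" using LQ_mult x by blast
  then show ?thesis using LQ_mult2 L_of_nat by blast
qed

end



context setting
begin

definition condj :: "nat \<Rightarrow> nat \<Rightarrow> 'n mexp \<Rightarrow> bool" where
  "condj D j f \<longleftrightarrow> deg (mexp_add f (ee j)) \<le> D \<and> mexp_add f (ee j) \<in> Delta ee j"

definition TSe :: "'n mexp \<Rightarrow> nat \<Rightarrow> 'n tup set" where
  "TSe e D = (case e of (a, b, m) \<Rightarrow> TS a b m D)"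

definition Hf :: "('n, 'c fract) dop \<Rightarrow> nat \<Rightarrow> ('n mexp \<Rightarrow> 'c fract) \<Rightarrow> 'n mexp \<Rightarrow> 'c fract" where
  "Hf P D \<phi> e = cf P e - (\<Sum>j<r. \<Sum>t\<in>TSe e D.
      (if lt e (mexp_add (fpart t) (ee j)) \<and> condj D j (fpart t)
       then \<phi> (mexp_add (fpart t) (ee j)) * inverse (lc j) else 0)
        * cf (g j) (gpart t) * of_nat (cc t))"

definition rho where "rho P D = wfrec (Rel D) (Hf P D)"

definition qf where
  "qf P D j f = (if condj D j f then rho P D (mexp_add f (ee j)) * inverse (lc j) else 0)"
definition qq where "qq P D j = (\<lambda>a b k. qf P D j (a, b, k))"
definition RR where
  "RR P D = (\<lambda>a b k. if deg (a, b, k) \<le> D \<and> (a, b, k) \<in> Delta_bar ee r then rho P D (a, b, k) else 0)"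
definition TT where
  "TT P D = (\<lambda>a b k. P a b k - (\<Sum>j<r. dmult (qq P D j) (g j) a b k) - RR P D a b k)"

lemma cf_qq [simp]: "cf (qq P D j) f = qf P D j f"
  by (cases f) (simp add: qq_def)

lemma rho_unfold: "rho P D e = Hf P D (cut (rho P D) (Rel D) e) e"
  unfolding rho_def by (rule wfrec[OF wf_Rel])

lemma rho_eq:
  "rho P D e = cf P e - (\<Sum>j<r. \<Sum>t\<in>TSe e D.
      (if lt e (mexp_add (fpart t) (ee j))
       then cf (qq P D j) (fpart t) * cf (g j) (gpart t) * of_nat (cc t) else 0))"
proof -
  have "(if lt e (mexp_add (fpart t) (ee j)) \<and> condj D j (fpart t)
       then cut (rho P D) (Rel D) e (mexp_add (fpart t) (ee j)) * inverse (lc j) else 0)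
        * cf (g j) (gpart t) * of_nat (cc t) =
        (if lt e (mexp_add (fpart t) (ee j))
       then cf (qq P D j) (fpart t) * cf (g j) (gpart t) * of_nat (cc t) else 0)" for j t
  proof (cases "lt e (mexp_add (fpart t) (ee j)) \<and> condj D j (fpart t)")
    case True
    then have "(mexp_add (fpart t) (ee j), e) \<in> Rel D" by (simp add: Rel_def condj_def)
    then show ?thesis using True by (simp add: cut_apply qf_def)
  next
    case False
    then show ?thesis by (auto simp: qf_def)
  qed
  then show ?thesis by (subst rho_unfold) (simp add: Hf_def)
qed

lemma rho_L:
  assumes PL: "\<forall>e. cf P e \<in> L"
  shows "rho P D e \<in> L"
proof (induction e rule: wf_induct[OF wf_Rel[of D]])
  case (1 e)
  have "(if lt e (mexp_add (fpart t) (ee j)) \<and> condj D j (fpart t)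
       then cut (rho P D) (Rel D) e (mexp_add (fpart t) (ee j)) * inverse (lc j) else 0)
        * cf (g j) (gpart t) * of_nat (cc t) \<in> L" if j: "j < r" for j t
  proof (cases "lt e (mexp_add (fpart t) (ee j)) \<and> condj D j (fpart t)")
    case True
    then have R: "(mexp_add (fpart t) (ee j), e) \<in> Rel D" by (simp add: Rel_def condj_def)
    then have "rho P D (mexp_add (fpart t) (ee j)) \<in> L" using 1 by blast
    then show ?thesis using True R ilc_L[OF j] g_L[OF j] L_of_nat
      by (simp add: cut_apply L_mult)
  next
    case False
    then show ?thesis using L_0 by (simp only: if_False mult_zero_left)
  qed
  note tm = this
  show ?case
  proof (subst rho_unfold, unfold Hf_def, rule L_diff)
    show "cf P e \<in> L" using PL by blast
  next
    show "(\<Sum>j<r. \<Sum>t\<in>TSe e D.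
      (if lt e (mexp_add (fpart t) (ee j)) \<and> condj D j (fpart t)
       then cut (rho P D) (Rel D) e (mexp_add (fpart t) (ee j)) * inverse (lc j) else 0)
        * cf (g j) (gpart t) * of_nat (cc t)) \<in> L"
      apply (rule L_sum)+ using tm by auto
  qed
qed

lemma qf_L: assumes PL: "\<forall>e. cf P e \<in> L" and j: "j < r" shows "qf P D j f \<in> L"
proof (cases "condj D j f")
  case True
  then show ?thesis unfolding qf_def using rho_L[OF PL] ilc_L[OF j] L_mult by simp
next
  case False
  then show ?thesis unfolding qf_def using L_0 by simp
qed

lemma RR_L: assumes PL: "\<forall>e. cf P e \<in> L" shows "RR P D a b k \<in> L"
  unfolding RR_def using rho_L[OF PL] L_0 by simp

lemma qq_bnd: "bnd (qq P D j) D"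
  unfolding bnd_def
proof (intro allI impI)
  fix a b k assume "qq P D j a b k \<noteq> 0"
  then have "condj D j (a, b, k)" by (auto simp: qq_def qf_def split: if_splits)
  then have "deg (mexp_add (a, b, k) (ee j)) \<le> D" by (simp add: condj_def)
  then show "deg (a, b, k) \<le> D" using deg_add by (metis add_leD1)
qed

lemma RR_bnd: "bnd (RR P D) D"
  unfolding bnd_def RR_def by (simp split: if_splits)

lemma dmult_qq: "dmult (qq P D j) (g j) a b m =
   (\<Sum>t\<in>TS a b m D. cf (qq P D j) (fpart t) * cf (g j) (gpart t) * of_nat (cc t))"
  unfolding dmult_TS[OF qq_bnd] by (rule sum.cong) (rule refl, rule summ_eq)

end



context setting
begin

lemma B1_eq:
  assumes j: "j < r"
  shows "(\<Sum>t\<in>TS a b m D. if mexp_add (fpart t) (ee j) = (a, b, m) \<and> (mupart t = (\<lambda>_. 0) \<and> gpart t = ee j)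
            then cf (qq P D j) (fpart t) * cf (g j) (gpart t) * of_nat (cc t) else 0)
         = (if (a, b, m) \<in> Delta ee j \<and> deg (a, b, m) \<le> D then rho P D (a, b, m) else 0)"
proof (cases "(a, b, m) \<in> Delta ee j \<and> deg (a, b, m) \<le> D")
  case True
  then obtain f0 where f0: "(a, b, m) = mexp_add f0 (ee j)" using Delta_cone by blast
  obtain x y z where f0e: "f0 = (x, y, z)" by (cases f0)
  obtain u v w where ej: "ee j = (u, v, w)" by (cases "ee j")
  define t0 :: "'n tup" where "t0 = (x, y, z, u, v, w, \<lambda>_. 0)"
  have abm: "a = (\<lambda>i. x i + u i)" "b = (\<lambda>i. y i + v i)" "m = z + w"
    using f0 f0e ej by (auto simp: mexp_add_def)
  have t0TS: "t0 \<in> TS a b m D"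
  proof -
    have "shp a b m t0" unfolding t0_def shp_def abm by simp
    moreover have "deg (a, b, m) = deg f0 + deg (ee j)" using f0 deg_add by simp
    then have "deg (x, y, z) \<le> D" using True f0e by simp
    ultimately show ?thesis by (simp add: TS_def t0_def fpart_def)
  qed
  have iff: "(mexp_add (fpart t) (ee j) = (a, b, m) \<and> (mupart t = (\<lambda>_. 0) \<and> gpart t = ee j)) \<longleftrightarrow> t = t0" for t
  proof
    assume A: "mexp_add (fpart t) (ee j) = (a, b, m) \<and> (mupart t = (\<lambda>_. 0) \<and> gpart t = ee j)"
    then have "fpart t = f0" using f0 mexp_add_cancel by metis
    then show "t = t0" using A f0e ej by (cases t) (simp add: fpart_def gpart_def mupart_def t0_def)
  next
    assume "t = t0"
    then show "mexp_add (fpart t) (ee j) = (a, b, m) \<and> (mupart t = (\<lambda>_. 0) \<and> gpart t = ee j)"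
      using f0 f0e ej by (simp add: t0_def fpart_def gpart_def mupart_def)
  qed
  have cond: "condj D j f0" using True f0 by (simp add: condj_def)
  have p0: "fpart t0 = f0" "gpart t0 = ee j" "mupart t0 = (\<lambda>_. 0)"
    using f0e ej by (simp_all add: t0_def fpart_def gpart_def mupart_def)
  have X0: "cf (qq P D j) (fpart t0) * cf (g j) (gpart t0) * of_nat (cc t0) = rho P D (a, b, m)"
  proof -
    have "cf (qq P D j) (fpart t0) * cf (g j) (gpart t0) * of_nat (cc t0) = qf P D j f0 * lc j"
      using p0 cc_mu0[OF p0(3)] by (simp add: lc_def)
    also have "\<dots> = rho P D (a, b, m) * inverse (lc j) * lc j" using cond f0 by (simp add: qf_def)
    also have "\<dots> = rho P D (a, b, m)" using lc_ne0[OF j] by simp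
    finally show ?thesis .
  qed
  have "(\<Sum>t\<in>TS a b m D. if mexp_add (fpart t) (ee j) = (a, b, m) \<and> (mupart t = (\<lambda>_. 0) \<and> gpart t = ee j)
            then cf (qq P D j) (fpart t) * cf (g j) (gpart t) * of_nat (cc t) else 0)
      = (\<Sum>t\<in>TS a b m D. if t = t0 then cf (qq P D j) (fpart t) * cf (g j) (gpart t) * of_nat (cc t) else 0)"
    by (simp only: iff)
  also have "\<dots> = cf (qq P D j) (fpart t0) * cf (g j) (gpart t0) * of_nat (cc t0)"
    by (simp only: sum.delta[OF finite_TS] t0TS if_True)
  finally show ?thesis using X0 True by simp
next
  case False
  have "(if mexp_add (fpart t) (ee j) = (a, b, m) \<and> (mupart t = (\<lambda>_. 0) \<and> gpart t = ee j)
            then cf (qq P D j) (fpart t) * cf (g j) (gpart t) * of_nat (cc t) else 0) = 0" for t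
  proof (cases "mexp_add (fpart t) (ee j) = (a, b, m)")
    case True
    then have "\<not> condj D j (fpart t)" using False by (auto simp: condj_def)
    then show ?thesis by (simp add: qf_def)
  next
    case False then show ?thesis by simp
  qed
  then have "(\<Sum>t\<in>TS a b m D. if mexp_add (fpart t) (ee j) = (a, b, m) \<and> (mupart t = (\<lambda>_. 0) \<and> gpart t = ee j)
            then cf (qq P D j) (fpart t) * cf (g j) (gpart t) * of_nat (cc t) else 0) = 0" by simp
  also have "0 = (if (a, b, m) \<in> Delta ee j \<and> deg (a, b, m) \<le> D then rho P D (a, b, m) else 0)"
    using False by (rule if_not_P[symmetric])
  finally show ?thesis .
qed

lemma B1_sum:
  "(\<Sum>j<r. if (a, b, m) \<in> Delta ee j \<and> deg (a, b, m) \<le> D then rho P D (a, b, m) else 0) + RR P D a b m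
     = (if deg (a, b, m) \<le> D then rho P D (a, b, m) else 0)"
proof (cases "\<exists>j0<r. (a, b, m) \<in> Delta ee j0")
  case True
  then obtain j0 where j0: "j0 < r" "(a, b, m) \<in> Delta ee j0" by blast
  have iff: "(a, b, m) \<in> Delta ee j \<longleftrightarrow> j = j0" for j
  proof
    assume "(a, b, m) \<in> Delta ee j"
    then show "j = j0" using j0 Delta_disj by (metis linorder_neqE_nat)
  next
    assume "j = j0" then show "(a, b, m) \<in> Delta ee j" using j0 by simp
  qed
  have "(\<Sum>j<r. if (a, b, m) \<in> Delta ee j \<and> deg (a, b, m) \<le> D then rho P D (a, b, m) else 0)
      = (\<Sum>j<r. if j = j0 then (if deg (a, b, m) \<le> D then rho P D (a, b, m) else 0) else 0)"
    by (rule sum.cong) (auto simp: iff)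
  also have "\<dots> = (if deg (a, b, m) \<le> D then rho P D (a, b, m) else 0)"
    using j0(1) by (simp add: sum.delta)
  moreover have "(a, b, m) \<notin> Delta_bar ee r" using j0 Delta_bar_iff by blast
  then have "RR P D a b m = 0" by (simp add: RR_def)
  ultimately show ?thesis by simp
next
  case False
  then have "(\<Sum>j<r. if (a, b, m) \<in> Delta ee j \<and> deg (a, b, m) \<le> D then rho P D (a, b, m) else 0) = 0"
    by (intro sum.neutral) auto
  then show ?thesis using False by (simp add: RR_def Delta_bar_iff)
qed

lemma rho_zero:
  assumes PD: "bnd P D" and d: "\<not> deg (a, b, m) \<le> D"
  shows "rho P D (a, b, m) = 0"
proof -
  have "cf P (a, b, m) = 0" using PD d bnd_cf by blast
  moreover have "(if lt (a, b, m) (mexp_add (fpart t) (ee j))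
       then cf (qq P D j) (fpart t) * cf (g j) (gpart t) * of_nat (cc t) else 0) = 0" for j t
  proof (cases "lt (a, b, m) (mexp_add (fpart t) (ee j))")
    case True
    then have "deg (a, b, m) \<le> deg (mexp_add (fpart t) (ee j))" by (rule lt_deg)
    then have "\<not> condj D j (fpart t)" using d by (simp add: condj_def)
    then show ?thesis by (simp add: qf_def)
  next
    case False then show ?thesis by simp
  qed
  ultimately show ?thesis by (subst rho_eq) simp
qed

end



context setting
begin

lemma T_LQ:
  assumes PD: "bnd P D" and PL: "\<forall>e. cf P e \<in> L"
  shows "TT P D a b m \<in> LQ"
proof -
  define X where "X j t = cf (qq P D j) (fpart t) * cf (g j) (gpart t) * of_nat (cc t)" for j t
  define F where "F j t = mexp_add (fpart t) (ee j)" for j t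
  define mn where "mn j t \<longleftrightarrow> mupart t = (\<lambda>_. 0) \<and> gpart t = ee j" for j t
  define A where "A j = (\<Sum>t\<in>TS a b m D. if lt (a, b, m) (F j t) then X j t else 0)" for j
  define B1 where "B1 j = (\<Sum>t\<in>TS a b m D. if F j t = (a, b, m) \<and> mn j t then X j t else 0)" for j
  define B2 where "B2 j = (\<Sum>t\<in>TS a b m D. if F j t = (a, b, m) \<and> \<not> mn j t then X j t else 0)" for j
  define C where "C j = (\<Sum>t\<in>TS a b m D. if lt (F j t) (a, b, m) then X j t else 0)" for j
  have split: "dmult (qq P D j) (g j) a b m = A j + B1 j + B2 j + C j" for j
  proof -
    have pt: "X j t = (if lt (a, b, m) (F j t) then X j t else 0) + (if F j t = (a, b, m) \<and> mn j t then X j t else 0)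
       + (if F j t = (a, b, m) \<and> \<not> mn j t then X j t else 0) + (if lt (F j t) (a, b, m) then X j t else 0)" for t
    proof (cases "F j t = (a, b, m)")
      case True then show ?thesis using lt_irr by simp
    next
      case False
      then have "lt (a, b, m) (F j t) \<and> \<not> lt (F j t) (a, b, m) \<or> lt (F j t) (a, b, m) \<and> \<not> lt (a, b, m) (F j t)"
        using lt_total lt_asym by metis
      then show ?thesis using False by auto
    qed
    have "dmult (qq P D j) (g j) a b m = (\<Sum>t\<in>TS a b m D. X j t)"
      unfolding dmult_qq X_def by (rule refl)
    also have "\<dots> = (\<Sum>t\<in>TS a b m D. (if lt (a, b, m) (F j t) then X j t else 0) + (if F j t = (a, b, m) \<and> mn j t then X j t else 0)
       + (if F j t = (a, b, m) \<and> \<not> mn j t then X j t else 0) + (if lt (F j t) (a, b, m) then X j t else 0))"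
      using pt by (rule sum.cong[OF refl])
    also have "\<dots> = A j + B1 j + B2 j + C j"
      unfolding A_def B1_def B2_def C_def by (simp only: sum.distrib)
    finally show ?thesis .
  qed
  have rhoA: "rho P D (a, b, m) = P a b m - (\<Sum>j<r. A j)"
    unfolding X_def F_def A_def using rho_eq[where P=P and D=D and e="(a, b, m)"] by (simp add: TSe_def)
  have B1e: "B1 j = (if (a, b, m) \<in> Delta ee j \<and> deg (a, b, m) \<le> D then rho P D (a, b, m) else 0)" if "j < r" for j
    using B1_eq[OF that, where a=a and b=b and m=m and D=D and P=P] unfolding B1_def X_def F_def mn_def by simp
  have XL: "cf (qq P D j) (fpart t) \<in> L" if "j < r" for j t using qf_L[OF PL that] by simp
  have B2L: "B2 j \<in> LQ" if j: "j < r" for j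
    unfolding B2_def
  proof (rule LQ_sum)
    fix t assume t: "t \<in> TS a b m D"
    show "(if F j t = (a, b, m) \<and> \<not> mn j t then X j t else 0) \<in> LQ"
    proof (cases "F j t = (a, b, m) \<and> \<not> mn j t")
      case True
      have "X j t \<in> LQ" unfolding X_def
        by (rule term_LQ[OF j _ XL[OF j]]) (use t True in \<open>auto simp: TS_def F_def mn_def\<close>)
      then show ?thesis using True by simp
    next
      case False then show ?thesis by (subst if_not_P[OF False]) (rule LQ_0)
    qed
  qed
  have CL: "C j \<in> LQ" if j: "j < r" for j
    unfolding C_def
  proof (rule LQ_sum)
    fix t assume t: "t \<in> TS a b m D"
    show "(if lt (F j t) (a, b, m) then X j t else 0) \<in> LQ"
    proof (cases "lt (F j t) (a, b, m)")
      case True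
      have "X j t \<in> LQ" unfolding X_def
        by (rule term_LQ[OF j _ XL[OF j]]) (use t True in \<open>auto simp: TS_def F_def\<close>)
      then show ?thesis using True by simp
    next
      case False then show ?thesis by (subst if_not_P[OF False]) (rule LQ_0)
    qed
  qed
  have R: "(\<Sum>j<r. B1 j) + RR P D a b m = (if deg (a, b, m) \<le> D then rho P D (a, b, m) else 0)"
  proof -
    have "(\<Sum>j<r. B1 j) = (\<Sum>j<r. if (a, b, m) \<in> Delta ee j \<and> deg (a, b, m) \<le> D then rho P D (a, b, m) else 0)"
      using B1e by (intro sum.cong) auto
    then show ?thesis using B1_sum by simp
  qed
  have rz: "rho P D (a, b, m) - (if deg (a, b, m) \<le> D then rho P D (a, b, m) else 0) = 0"
    using rho_zero[OF PD] by auto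
  have "TT P D a b m = P a b m - (\<Sum>j<r. A j + B1 j + B2 j + C j) - RR P D a b m"
    by (simp add: TT_def split)
  also have "\<dots> = (rho P D (a, b, m) - ((\<Sum>j<r. B1 j) + RR P D a b m)) - (\<Sum>j<r. B2 j + C j)"
    using rhoA by (simp add: sum.distrib algebra_simps)
  also have "\<dots> = - (\<Sum>j<r. B2 j + C j)" using R rz by simp
  finally show ?thesis using B2L CL by (auto intro!: LQ_uminus LQ_sum LQ_add)
qed

lemma existence:
  assumes P_in: "P \<in> dop_over L"
  shows "\<exists>q R T. division_rep ord Q h r g P q R T"
proof -
  have "wf_dop P" using P_in by (simp add: dop_over_def)
  then obtain D where PD: "bnd P D" using wf_bnd by blast
  have PL: "\<forall>e. cf P e \<in> L" using P_in by (auto simp: dop_over_def cf_def)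
  define Dg where "Dg j = (SOME D. bnd (g j) D)" for j
  define DG where "DG = (\<Sum>j<r. Dg j)"
  have gDG: "bnd (g j) DG" if "j < r" for j
  proof -
    have "bnd (g j) (Dg j)" unfolding Dg_def using g_bnd[OF that] by (rule someI_ex)
    moreover have "Dg j \<le> DG" unfolding DG_def using that by (intro member_le_sum) auto
    ultimately show ?thesis by (rule bnd_mono)
  qed
  define q where "q = qq P D"
  define R where "R = RR P D"
  define T where "T = TT P D"
  have Sb: "bnd (\<lambda>a b k. \<Sum>j<r. dmult (q j) (g j) a b k) (D + DG)"
    unfolding q_def by (intro bnd_sum bnd_dmult qq_bnd gDG)
  have Tb: "bnd T (D + DG)" unfolding bnd_def
  proof (intro allI impI)
    fix a b k assume "T a b k \<noteq> 0"
    then have "P a b k \<noteq> 0 \<or> (\<Sum>j<r. dmult (q j) (g j) a b k) \<noteq> 0 \<or> R a b k \<noteq> 0"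
      unfolding T_def TT_def q_def R_def by auto
    moreover have "P a b k \<noteq> 0 \<Longrightarrow> deg (a, b, k) \<le> D + DG" using bnd_mono[OF PD, of "D + DG"] by (auto simp: bnd_def)
    moreover have "R a b k \<noteq> 0 \<Longrightarrow> deg (a, b, k) \<le> D + DG" using RR_bnd unfolding R_def bnd_def by fastforce
    moreover have "(\<Sum>j<r. dmult (q j) (g j) a b k) \<noteq> 0 \<Longrightarrow> deg (a, b, k) \<le> D + DG"
      using Sb by (auto simp: bnd_def)
    ultimately show "deg (a, b, k) \<le> D + DG" by blast
  qed
  have "division_rep ord Q h r g P q R T"
    unfolding division_rep_def
  proof (intro conjI allI impI ballI subsetI)
    show "q j \<in> dop_over UNIV" for j
      unfolding q_def dop_over_def using qq_bnd wf_bnd by blast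
    show "R \<in> dop_over UNIV" unfolding R_def dop_over_def using RR_bnd wf_bnd by blast
    show "T \<in> dop_over UNIV" unfolding dop_over_def using Tb wf_bnd by blast
    show "P = dadd (dadd (\<lambda>a b k. \<Sum>j<r. dmult (q j) (g j) a b k) R) T"
      unfolding dadd_def T_def TT_def q_def R_def by (simp add: fun_eq_iff)
    show "mexp_add e (exp_modQ ord Q (g j)) \<in> Delta (\<lambda>i. exp_modQ ord Q (g i)) j"
      if "j < r" "q j \<noteq> dzero" "e \<in> supp (q j)" for j e
    proof -
      obtain a b k where e: "e = (a, b, k)" by (cases e)
      then have "qf P D j (a, b, k) \<noteq> 0" using that(3) by (simp add: supp_def q_def qq_def)
      then have "condj D j e" using e by (auto simp: qf_def split: if_splits)
      then show ?thesis by (simp add: condj_def)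
    qed
    show "x \<in> Delta_bar (\<lambda>i. exp_modQ ord Q (g i)) r" if "R \<noteq> dzero" "x \<in> supp R" for x
    proof -
      obtain a b k where e: "x = (a, b, k)" by (cases x)
      then have "RR P D a b k \<noteq> 0" using that(2) by (simp add: supp_def R_def)
      then show ?thesis using e by (auto simp: RR_def split: if_splits)
    qed
    show "q j \<in> dop_over L" if "j < r" for j
    proof -
      have "wf_dop (qq P D j)" using qq_bnd wf_bnd by blast
      then show ?thesis unfolding dop_over_def q_def using qf_L[OF PL that] by (auto simp: qq_def)
    qed
    show "R \<in> dop_over L" unfolding dop_over_def R_def using RR_bnd wf_bnd RR_L[OF PL] by blast
    show "T \<in> dop_over LQ" unfolding dop_over_def using Tb wf_bnd T_LQ[OF PD PL] by (auto simp: T_def)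
  qed
  then show ?thesis by blast
qed

end



lemma bnd_common:
  fixes r :: nat and F :: "nat \<Rightarrow> ('n::finite, 'f::zero) dop"
  assumes "\<And>j. j < r \<Longrightarrow> \<exists>D. bnd (F j) D"
  shows "\<exists>D. \<forall>j<r. bnd (F j) D"
proof -
  define Dj where "Dj j = (SOME D. bnd (F j) D)" for j
  have "bnd (F j) (\<Sum>j<r. Dj j)" if "j < r" for j
  proof -
    have "bnd (F j) (Dj j)" unfolding Dj_def using assms[OF that] by (rule someI_ex)
    moreover have "Dj j \<le> (\<Sum>j<r. Dj j)" using that by (intro member_le_sum) auto
    ultimately show ?thesis by (rule bnd_mono)
  qed
  then show ?thesis by blast
qed

context setting
begin

lemma main_sum:
  assumes j: "j < r" and e: "(a, b, m) = mexp_add f0 (ee j)" and d: "deg f0 \<le> D"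
  shows "(\<Sum>t\<in>TS a b m D. if mexp_add (fpart t) (ee j) = (a, b, m) \<and> (mupart t = (\<lambda>_. 0) \<and> gpart t = ee j)
            then x (fpart t) * cf (g j) (gpart t) * of_nat (cc t) else 0) = x f0 * lc j"
proof -
  obtain x' y z where f0e: "f0 = (x', y, z)" by (cases f0)
  obtain u v w where ej: "ee j = (u, v, w)" by (cases "ee j")
  define t0 :: "'n tup" where "t0 = (x', y, z, u, v, w, \<lambda>_. 0)"
  have abm: "a = (\<lambda>i. x' i + u i)" "b = (\<lambda>i. y i + v i)" "m = z + w"
    using e f0e ej by (auto simp: mexp_add_def)
  have t0TS: "t0 \<in> TS a b m D"
  proof -
    have "shp a b m t0" unfolding t0_def shp_def abm by simp
    then show ?thesis using d f0e by (simp add: TS_def t0_def fpart_def)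
  qed
  have iff: "(mexp_add (fpart t) (ee j) = (a, b, m) \<and> (mupart t = (\<lambda>_. 0) \<and> gpart t = ee j)) \<longleftrightarrow> t = t0" for t
  proof
    assume A: "mexp_add (fpart t) (ee j) = (a, b, m) \<and> (mupart t = (\<lambda>_. 0) \<and> gpart t = ee j)"
    then have "fpart t = f0" using e mexp_add_cancel by metis
    then show "t = t0" using A f0e ej by (cases t) (simp add: fpart_def gpart_def mupart_def t0_def)
  next
    assume "t = t0"
    then show "mexp_add (fpart t) (ee j) = (a, b, m) \<and> (mupart t = (\<lambda>_. 0) \<and> gpart t = ee j)"
      using e f0e ej by (simp add: t0_def fpart_def gpart_def mupart_def)
  qed
  have p0: "fpart t0 = f0" "gpart t0 = ee j" "mupart t0 = (\<lambda>_. 0)"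
    using f0e ej by (simp_all add: t0_def fpart_def gpart_def mupart_def)
  have "(\<Sum>t\<in>TS a b m D. if mexp_add (fpart t) (ee j) = (a, b, m) \<and> (mupart t = (\<lambda>_. 0) \<and> gpart t = ee j)
            then x (fpart t) * cf (g j) (gpart t) * of_nat (cc t) else 0)
      = (\<Sum>t\<in>TS a b m D. if t = t0 then x (fpart t) * cf (g j) (gpart t) * of_nat (cc t) else 0)"
    by (simp only: iff)
  also have "\<dots> = x (fpart t0) * cf (g j) (gpart t0) * of_nat (cc t0)"
    by (simp only: sum.delta[OF finite_TS] t0TS if_True)
  also have "\<dots> = x f0 * lc j" using p0 cc_mu0[OF p0(3)] by (simp add: lc_def)
  finally show ?thesis .
qed

lemma main_sum0:
  assumes j: "j < r" and xq: "\<And>f. mexp_add f (ee j) = (a, b, m) \<Longrightarrow> x f \<in> LQ"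
  shows "(\<Sum>t\<in>TS a b m D. if mexp_add (fpart t) (ee j) = (a, b, m) \<and> (mupart t = (\<lambda>_. 0) \<and> gpart t = ee j)
            then x (fpart t) * cf (g j) (gpart t) * of_nat (cc t) else 0) \<in> LQ"
proof (rule LQ_sum)
  fix t
  show "(if mexp_add (fpart t) (ee j) = (a, b, m) \<and> (mupart t = (\<lambda>_. 0) \<and> gpart t = ee j)
            then x (fpart t) * cf (g j) (gpart t) * of_nat (cc t) else 0) \<in> LQ"
  proof (cases "mexp_add (fpart t) (ee j) = (a, b, m) \<and> (mupart t = (\<lambda>_. 0) \<and> gpart t = ee j)")
    case True
    then have "x (fpart t) \<in> LQ" using xq by blast
    then have "x (fpart t) * cf (g j) (gpart t) * of_nat (cc t) \<in> LQ"
      using LQ_mult2 g_L[OF j] L_of_nat by blast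
    then show ?thesis using True by simp
  next
    case False then show ?thesis by (subst if_not_P[OF False]) (rule LQ_0)
  qed
qed

end



context setting
begin

lemma uniqueness:
  assumes d1: "division_rep ord Q h r g P q R T" and d2: "division_rep ord Q h r g P q' R' T'"
  shows "(\<forall>j<r. dminus (q j) (q' j) \<in> dop_over LQ) \<and> dminus R R' \<in> dop_over LQ"
proof -
  have qw: "\<exists>D. bnd (q j) D" if "j < r" for j
  proof -
    have "wf_dop (q j)" using d1 that unfolding division_rep_def dop_over_def by blast
    then show ?thesis using wf_bnd by blast
  qed
  have q'w: "\<exists>D. bnd (q' j) D" if "j < r" for j
  proof -
    have "wf_dop (q' j)" using d2 that unfolding division_rep_def dop_over_def by blast
    then show ?thesis using wf_bnd by blast
  qed
  have Rw: "\<exists>D. bnd R D"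
  proof -
    have "wf_dop R" using d1 unfolding division_rep_def dop_over_def by blast
    then show ?thesis using wf_bnd by blast
  qed
  have R'w: "\<exists>D. bnd R' D"
  proof -
    have "wf_dop R'" using d2 unfolding division_rep_def dop_over_def by blast
    then show ?thesis using wf_bnd by blast
  qed
  obtain D1 where D1: "\<forall>j<r. bnd (q j) D1" using bnd_common[of r q] qw by blast
  obtain D2 where D2: "\<forall>j<r. bnd (q' j) D2" using bnd_common[of r q'] q'w by blast
  obtain D3 where D3: "bnd R D3" using Rw by blast
  obtain D4 where D4: "bnd R' D4" using R'w by blast
  define D where "D = D1 + D2 + D3 + D4"
  have qb: "bnd (q j) D" if "j < r" for j using D1 that bnd_mono unfolding D_def by (metis le_add1 le_add2 add.assoc)
  have q'b: "bnd (q' j) D" if "j < r" for j using D2 that bnd_mono unfolding D_def by (metis le_add1 le_add2 add.assoc)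
  have Rb: "bnd R D" using D3 bnd_mono unfolding D_def by (metis le_add1 le_add2 add.assoc)
  have R'b: "bnd R' D" using D4 bnd_mono unfolding D_def by (metis le_add2)
  have qL: "cf (q j) f \<in> L" if "j < r" for j f
    using d1 that unfolding division_rep_def by (cases f) (auto simp: dop_over_def)
  have q'L: "cf (q' j) f \<in> L" if "j < r" for j f
    using d2 that unfolding division_rep_def by (cases f) (auto simp: dop_over_def)
  have RL: "cf R e \<in> L" for e using d1 unfolding division_rep_def by (cases e) (auto simp: dop_over_def)
  have R'L: "cf R' e \<in> L" for e using d2 unfolding division_rep_def by (cases e) (auto simp: dop_over_def)
  have TQ: "T a b m \<in> LQ" for a b m using d1 unfolding division_rep_def by (auto simp: dop_over_def)
  have T'Q: "T' a b m \<in> LQ" for a b m using d2 unfolding division_rep_def by (auto simp: dop_over_def)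
  have E1: "P a b m = (\<Sum>j<r. dmult (q j) (g j) a b m) + R a b m + T a b m" for a b m
  proof -
    have "P = dadd (dadd (\<lambda>a b k. \<Sum>j<r. dmult (q j) (g j) a b k) R) T"
      using d1 unfolding division_rep_def by blast
    then show ?thesis by (simp add: dadd_def)
  qed
  have E2: "P a b m = (\<Sum>j<r. dmult (q' j) (g j) a b m) + R' a b m + T' a b m" for a b m
  proof -
    have "P = dadd (dadd (\<lambda>a b k. \<Sum>j<r. dmult (q' j) (g j) a b k) R') T'"
      using d2 unfolding division_rep_def by blast
    then show ?thesis by (simp add: dadd_def)
  qed
  have qD: "mexp_add f (ee j) \<in> Delta ee j" if "j < r" "cf (q j) f \<noteq> 0" for j f
  proof -
    obtain a b k where f: "f = (a, b, k)" by (cases f)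
    have "q j \<noteq> dzero" "f \<in> supp (q j)" using that f by (auto simp: dzero_def supp_def)
    then show ?thesis using d1 that(1) unfolding division_rep_def by blast
  qed
  have q'D: "mexp_add f (ee j) \<in> Delta ee j" if "j < r" "cf (q' j) f \<noteq> 0" for j f
  proof -
    obtain a b k where f: "f = (a, b, k)" by (cases f)
    have "q' j \<noteq> dzero" "f \<in> supp (q' j)" using that f by (auto simp: dzero_def supp_def)
    then show ?thesis using d2 that(1) unfolding division_rep_def by blast
  qed
  have RD: "e \<in> Delta_bar ee r" if "cf R e \<noteq> 0" for e
  proof -
    obtain a b k where f: "e = (a, b, k)" by (cases e)
    have "R \<noteq> dzero" "e \<in> supp R" using that f by (auto simp: dzero_def supp_def)
    then show ?thesis using d1 unfolding division_rep_def by blast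
  qed
  have R'D: "e \<in> Delta_bar ee r" if "cf R' e \<noteq> 0" for e
  proof -
    obtain a b k where f: "e = (a, b, k)" by (cases e)
    have "R' \<noteq> dzero" "e \<in> supp R'" using that f by (auto simp: dzero_def supp_def)
    then show ?thesis using d2 unfolding division_rep_def by blast
  qed
  define Dq where "Dq j f = cf (q j) f - cf (q' j) f" for j f
  define DR where "DR e = cf R e - cf R' e" for e
  have DqL: "Dq j f \<in> L" if "j < r" for j f unfolding Dq_def using qL q'L that by (blast intro: L_diff)
  have DqD: "mexp_add f (ee j) \<in> Delta ee j \<and> deg f \<le> D" if "j < r" "Dq j f \<notin> LQ" for j f
  proof -
    have "Dq j f \<noteq> 0" using that(2) LQ_0 by auto
    then have "cf (q j) f \<noteq> 0 \<or> cf (q' j) f \<noteq> 0" unfolding Dq_def by auto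
    then show ?thesis using qD q'D bnd_cf qb q'b that(1) by blast
  qed
  have DRD: "e \<in> Delta_bar ee r \<and> deg e \<le> D" if "DR e \<notin> LQ" for e
  proof -
    have "DR e \<noteq> 0" using that LQ_0 by auto
    then have "cf R e \<noteq> 0 \<or> cf R' e \<noteq> 0" unfolding DR_def by auto
    then show ?thesis using RD R'D bnd_cf Rb R'b by blast
  qed
  define DG where "DG = (\<Sum>j<r. deg (ee j))"
  define B where "B = {mexp_add f (ee j) | j f. j < r \<and> Dq j f \<notin> LQ} \<union> {e. DR e \<notin> LQ}"
  have Bempty: "B = {}"
  proof (rule ccontr)
    assume ne: "B \<noteq> {}"
    have bd: "\<forall>e\<in>B. deg e \<le> D + DG"
    proof
      fix e assume "e \<in> B"
      then consider (a) j f where "j < r" "Dq j f \<notin> LQ" "e = mexp_add f (ee j)" | (b) "DR e \<notin> LQ"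
        unfolding B_def by blast
      then show "deg e \<le> D + DG"
      proof cases
        case a
        have "deg (ee j) \<le> DG" unfolding DG_def using a(1) by (intro member_le_sum) auto
        moreover have "deg (mexp_add f (ee j)) = deg f + deg (ee j)" by (rule deg_add)
        ultimately show ?thesis using a DqD[OF a(1,2)] by auto
      next
        case b then show ?thesis using DRD by fastforce
      qed
    qed
    obtain es where es: "es \<in> B" "\<forall>e'\<in>B. e' \<noteq> es \<longrightarrow> lt e' es" using max_exists[OF ne bd] by blast
    obtain a b m where esd: "es = (a, b, m)" by (cases es)
    define Y where "Y j t = Dq j (fpart t) * cf (g j) (gpart t) * of_nat (cc t)" for j t
    define mc where "mc j t \<longleftrightarrow> mexp_add (fpart t) (ee j) = (a, b, m) \<and> (mupart t = (\<lambda>_. 0) \<and> gpart t = ee j)" for j t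
    define M where "M j = (\<Sum>t\<in>TS a b m D. if mc j t then Y j t else 0)" for j
    define N where "N j = (\<Sum>t\<in>TS a b m D. if mc j t then 0 else Y j t)" for j
    have diff: "dmult (q j) (g j) a b m - dmult (q' j) (g j) a b m = M j + N j" if "j < r" for j
    proof -
      have "dmult (q j) (g j) a b m - dmult (q' j) (g j) a b m = (\<Sum>t\<in>TS a b m D. Y j t)"
        unfolding dmult_TS[OF qb[OF that]] dmult_TS[OF q'b[OF that]] Y_def Dq_def
        by (simp add: summ_eq sum_subtractf[symmetric] algebra_simps)
      also have "\<dots> = (\<Sum>t\<in>TS a b m D. (if mc j t then Y j t else 0) + (if mc j t then 0 else Y j t))"
        by (rule sum.cong) auto
      also have "\<dots> = M j + N j" unfolding M_def N_def by (rule sum.distrib)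
      finally show ?thesis .
    qed
    have NQ: "N j \<in> LQ" if j: "j < r" for j
      unfolding N_def
    proof (rule LQ_sum)
      fix t assume t: "t \<in> TS a b m D"
      have s: "shp a b m t" using t by (simp add: TS_def)
      show "(if mc j t then 0 else Y j t) \<in> LQ"
      proof (cases "mc j t")
        case True then show ?thesis using LQ_0 by simp
      next
        case False
        consider (gt) "lt (a, b, m) (mexp_add (fpart t) (ee j))"
          | (eq) "mexp_add (fpart t) (ee j) = (a, b, m)"
          | (lt) "lt (mexp_add (fpart t) (ee j)) (a, b, m)" using lt_total by blast
        then have "Y j t \<in> LQ"
        proof cases
          case gt
          have "Dq j (fpart t) \<in> LQ"
          proof (rule ccontr)
            assume "Dq j (fpart t) \<notin> LQ"
            then have "mexp_add (fpart t) (ee j) \<in> B" using j unfolding B_def by blast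
            then have "mexp_add (fpart t) (ee j) = es \<or> lt (mexp_add (fpart t) (ee j)) es" using es by blast
            then show False using gt esd lt_irr lt_asym by metis
          qed
          then show ?thesis unfolding Y_def using LQ_mult2 g_L[OF j] L_of_nat by blast
        next
          case eq
          show ?thesis unfolding Y_def
            by (rule term_LQ[OF j s DqL[OF j]]) (use eq False in \<open>auto simp: mc_def\<close>)
        next
          case lt
          show ?thesis unfolding Y_def
            by (rule term_LQ[OF j s DqL[OF j]]) (use lt in auto)
        qed
        then show ?thesis using False by simp
      qed
    qed
    have eqn: "(\<Sum>j<r. M j + N j) + DR (a, b, m) \<in> LQ"
    proof -
      have "(\<Sum>j<r. M j + N j) = (\<Sum>j<r. dmult (q j) (g j) a b m - dmult (q' j) (g j) a b m)"
        using diff by (intro sum.cong) auto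
      then have "(\<Sum>j<r. M j + N j) + DR (a, b, m) =
          (\<Sum>j<r. dmult (q j) (g j) a b m) - (\<Sum>j<r. dmult (q' j) (g j) a b m) + (R a b m - R' a b m)"
        by (simp add: DR_def sum_subtractf)
      also have "\<dots> = T' a b m - T a b m" using E1[of a b m] E2[of a b m] by (simp add: algebra_simps)
      finally show ?thesis using TQ T'Q LQ_diff by simp
    qed
    have Mzero: "M j \<in> LQ" if "j < r" "\<And>f. mexp_add f (ee j) = (a, b, m) \<Longrightarrow> Dq j f \<in> LQ" for j
      unfolding M_def mc_def Y_def by (rule main_sum0[OF that(1), where x="Dq j"]) (rule that(2))
    show False
    proof (cases "DR (a, b, m) \<notin> LQ")
      case True
      have inbar: "(a, b, m) \<in> Delta_bar ee r" using DRD True by blast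
      have "M j \<in> LQ" if j: "j < r" for j
      proof (rule Mzero[OF j])
        fix f assume fe: "mexp_add f (ee j) = (a, b, m)"
        show "Dq j f \<in> LQ"
        proof (rule ccontr)
          assume "Dq j f \<notin> LQ" then have "(a, b, m) \<in> Delta ee j" using DqD j fe by metis
          then show False using inbar j Delta_bar_iff by blast
        qed
      qed
      then have "(\<Sum>j<r. M j + N j) \<in> LQ" using NQ by (auto intro!: LQ_sum LQ_add)
      then have "(\<Sum>j<r. M j + N j) + DR (a, b, m) - (\<Sum>j<r. M j + N j) \<in> LQ" using eqn LQ_diff by blast
      then show False using True by simp
    next
      case False
      then have DRQ: "DR (a, b, m) \<in> LQ" by blast
      have "es \<notin> {e. DR e \<notin> LQ}" using DRQ esd by simp
      then have "es \<in> {mexp_add f (ee j) | j f. j < r \<and> Dq j f \<notin> LQ}" using es(1) unfolding B_def by blast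
      then obtain j0 f0 where j0: "j0 < r" "Dq j0 f0 \<notin> LQ" "(a, b, m) = mexp_add f0 (ee j0)" using esd by auto
      have inD: "(a, b, m) \<in> Delta ee j0" and df0: "deg f0 \<le> D" using DqD[OF j0(1,2)] j0(3) by auto
      have Mo: "M j \<in> LQ" if j: "j < r" "j \<noteq> j0" for j
      proof (rule Mzero[OF j(1)])
        fix f assume fe: "mexp_add f (ee j) = (a, b, m)"
        show "Dq j f \<in> LQ"
        proof (rule ccontr)
          assume "Dq j f \<notin> LQ" then have "(a, b, m) \<in> Delta ee j" using DqD j fe by metis
          then show False using inD j Delta_disj by (metis linorder_neqE_nat)
        qed
      qed
      have M0: "M j0 = Dq j0 f0 * lc j0"
        unfolding M_def mc_def Y_def by (rule main_sum[OF j0(1) j0(3) df0])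
      have split: "(\<Sum>j<r. M j + N j) = (M j0 + N j0) + (\<Sum>j\<in>{..<r}-{j0}. M j + N j)"
        using j0(1) by (simp add: sum.remove)
      have restQ: "(\<Sum>j\<in>{..<r}-{j0}. M j + N j) \<in> LQ" using Mo NQ by (auto intro!: LQ_sum LQ_add)
      have Meq: "M j0 = ((\<Sum>j<r. M j + N j) + DR (a, b, m)) - (N j0 + (\<Sum>j\<in>{..<r}-{j0}. M j + N j) + DR (a, b, m))"
        using split by (simp add: algebra_simps)
      have "N j0 + (\<Sum>j\<in>{..<r}-{j0}. M j + N j) + DR (a, b, m) \<in> LQ"
        using NQ[OF j0(1)] restQ DRQ by (intro LQ_add)
      then have "((\<Sum>j<r. M j + N j) + DR (a, b, m)) - (N j0 + (\<Sum>j\<in>{..<r}-{j0}. M j + N j) + DR (a, b, m)) \<in> LQ"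
        by (rule LQ_diff[OF eqn])
      then have "M j0 \<in> LQ" by (simp only: Meq)
      then have "Dq j0 f0 * lc j0 \<in> CQ" using M0 LQ_CQ by simp
      moreover have "Dq j0 f0 * lc j0 \<notin> CQ"
        using nonQ_mult[OF DqL[OF j0(1)] lc_L[OF j0(1)] L_notLQ[OF DqL[OF j0(1)] j0(2)] lc_nonQ[OF j0(1)]] .
      ultimately show False by blast
    qed
  qed
  have DqQ: "Dq j f \<in> LQ" if "j < r" for j f using Bempty that unfolding B_def by blast
  have DRQ: "DR e \<in> LQ" for e using Bempty unfolding B_def by blast
  show ?thesis
  proof (intro conjI allI impI)
    fix j assume j: "j < r"
    have "bnd (dminus (q j) (q' j)) D" unfolding dminus_def by (rule bnd_diff[OF qb[OF j] q'b[OF j]])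
    moreover have "dminus (q j) (q' j) a b k \<in> LQ" for a b k
      using DqQ[OF j, of "(a, b, k)"] by (simp add: Dq_def dminus_def)
    ultimately show "dminus (q j) (q' j) \<in> dop_over LQ" unfolding dop_over_def using wf_bnd by blast
  next
    have "bnd (dminus R R') D" unfolding dminus_def by (rule bnd_diff[OF Rb R'b])
    moreover have "dminus R R' a b k \<in> LQ" for a b k
      using DRQ[of "(a, b, k)"] by (simp add: DR_def dminus_def)
    ultimately show "dminus R R' \<in> dop_over LQ" unfolding dop_over_def using wf_bnd by blast
  qed
qed

end


theorem mainTheorem3:
  fixes ord :: "('n::finite \<Rightarrow> nat) \<times> ('n \<Rightarrow> nat) \<Rightarrow> ('n \<Rightarrow> nat) \<times> ('n \<Rightarrow> nat) \<Rightarrow> bool"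
    and Q :: "'c::idom set" and h :: 'c and r :: nat
    and g :: "nat \<Rightarrow> ('n, 'c fract) dop" and P :: "('n, 'c fract) dop"
  assumes C: "no_int_in_primes TYPE('c)"
    and adm: "admissible ord"
    and Qprime: "is_prime_ideal Q"
    and hQ: "h \<notin> Q"
    and g_in: "\<forall>j<r. g j \<in> dop_over (loc_h h) - dop_over (locQ_h Q h)"
    and g_lc: "\<forall>j<r. lc_num_dvd Q (lc_modQ ord Q (g j)) h"
    and P_in: "P \<in> dop_over (loc_h h)"
  shows "(\<exists>q R T. division_rep ord Q h r g P q R T) \<and>
         (\<forall>q R T q' R' T'. division_rep ord Q h r g P q R T \<longrightarrow> division_rep ord Q h r g P q' R' T' \<longrightarrow>
            (\<forall>j<r. dminus (q j) (q' j) \<in> dop_over (locQ_h Q h)) \<and> dminus R R' \<in> dop_over (locQ_h Q h))"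
proof -
  have S: "setting ord Q h r g"
    unfolding setting_def adm_ord_def coef_def setting_axioms_def using adm Qprime hQ g_in g_lc by blast
  show ?thesis using setting.existence[OF S P_in] setting.uniqueness[OF S] by blast
qed

end
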